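(* Let $S$ be a complete star-omega semiring, let $\Sigma$ be an alphabet, and let $\mathcal P=(n,\Gamma,I,M,P,p_0,l)$ be an $S\langle\Sigma\cup\{\epsilon\}\rangle$-$\omega$-pushdown automaton over $(S\langle\langle\Sigma^*\rangle\rangle,S\langle\langle\Sigma^\omega\rangle\rangle)$. Put $x_0=I(M^* )_{p_0,\epsilon}P$, $x_p=(M^* )_{p,\epsilon}$, $z_0=I(M^{\omega,l})_{p_0}$, $z_p=(M^{\omega,l})_p$ ($p\in\Gamma$). Then these satisfy the mixed algebraic system $$x_0=I x_{p_0}P,\qquad x_p=\sum_{\pi=p_1\dots p_k\in\Gamma^*}M_{p,\pi}\,x_{p_1}\cdots x_{p_k}\ (p\in\Gamma),$$ $$z_0=I z_{p_0},\qquad z_p=\sum_{\pi=p_1\dots p_k\in\Gamma^+}M_{p,\pi}\sum_{1\le j\le k}x_{p_1}\cdots x_{p_{j-1}}z_{p_j}\ (p\in\Gamma),$$ where the empty product $x_{p_1}\cdots x_{p_k}$ for $k=0$ is the $n\times n$ identity matrix.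
   Context: A complete semiring-semimodule pair $(S,V)$ (in the sense of Ésik and Kuich, "Modern Automata Theory") consists of a complete starsemiring $S$ (arbitrary sums with infinite associativity/commutativity/distributivity laws, star $s^*=\sum_{j\ge0}s^j$) and a complete $S$-semimodule $V$, with infinite products $\prod_{j\ge1}s_j\in V$ of sequences in $S$ satisfying the axioms of that framework. $S$ is a complete star-omega semiring if $(S,S)$ is a complete semiring-semimodule pair; then $(S\langle\langle\Sigma^*\rangle\rangle,S\langle\langle\Sigma^\omega\rangle\rangle)$ (formal power series over finite, resp. infinite, words) is a complete semiring-semimodule pair. $S\langle\Sigma\cup\{\epsilon\}\rangle$ denotes the series with support contained in $\Sigma\cup\{\epsilon\}$. A pushdown transition matrix $M\in (S'^{n\times n})^{\Gamma^*\times\Gamma^*}$ (here $S'=S\langle\Sigma\cup\{\epsilon\}\rangle$; a $\Gamma^*\times\Gamma^*$ matrix with $n\times n$ blocks over $S'$) satisfies (i) for each $p\in\Gamma$ only finitely many blocks $M_{p,\pi}$ are nonzero, and (ii) $M_{\pi_1,\pi_2}=M_{p,\pi}$ if $\pi_1=p\pi'$, $\pi_2=\pi\pi'$ for some $p\in\Gamma$, $\pi,\pi'\in\Gamma^*$, and $0$ otherwise. An $S'$-$\omega$-pushdown automaton $(n,\Gamma,I,M,P,p_0,l)$ consists of $n\ge1$ (states $1,\dots,n$), an alphabet $\Gamma$, such a matrix $M$, $I\in S'^{1\times n}$, $P\in S'^{n\times1}$, $p_0\in\Gamma$ and $l\in\{0,\dots,n\}$. $M^*=\sum_{m\ge0}M^m$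 with blocks $(M^* )_{\pi,\pi'}$; with $P_l=\{(j_1,j_2,\dots)\in\{1,\dots,n\}^\omega\mid j_t\le l\text{ for infinitely many }t\}$, $M^{\omega,l}\in ((S\langle\langle\Sigma^\omega\rangle\rangle)^n)^{\Gamma^*}$ is given by $((M^{\omega,l})_\pi)_i=\sum_{\pi_1,\pi_2,\ldots\in\Gamma^*}\sum_{(j_1,j_2,\ldots)\in P_l}(M_{\pi,\pi_1})_{i,j_1}(M_{\pi_1,\pi_2})_{j_1,j_2}\cdots$. *)

theory Defs
  imports Main
begin

section \<open>Complete semirings (sums indexed by subsets of a fixed universe of size continuum)\<close>

type_synonym idx = "nat \<Rightarrow> nat"
type_synonym 's csum_op = "(idx \<Rightarrow> 's) \<Rightarrow> idx set \<Rightarrow> 's"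

definition complete_semiring :: "'s::semiring_1 csum_op \<Rightarrow> bool" where
  "complete_semiring cs \<longleftrightarrow>
     (\<forall>f g I. (\<forall>i\<in>I. f i = g i) \<longrightarrow> cs f I = cs g I) \<and>
     (\<forall>f. cs f {} = 0) \<and>
     (\<forall>f i. cs f {i} = f i) \<and>
     (\<forall>f i j. i \<noteq> j \<longrightarrow> cs f {i, j} = f i + f j) \<and>
     (\<forall>f I J (Q :: idx \<Rightarrow> idx set).
        I = (\<Union>j\<in>J. Q j) \<and> (\<forall>j\<in>J. \<forall>j'\<in>J. j \<noteq> j' \<longrightarrow> Q j \<inter> Q j' = {})
        \<longrightarrow> cs f I = cs (\<lambda>j. cs f (Q j)) J) \<and>
     (\<forall>f I c. cs (\<lambda>i. f i * c) I = cs f I * c) \<and>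
     (\<forall>f I c. cs (\<lambda>i. c * f i) I = c * cs f I)"

definition gsum :: "'s csum_op \<Rightarrow> ('i \<Rightarrow> 's) \<Rightarrow> 'i set \<Rightarrow> 's" where
  "gsum cs f I = (let g = (SOME g :: 'i \<Rightarrow> idx. inj_on g I)
                  in cs (\<lambda>u. f (the_inv_into I g u)) (g ` I))"

text \<open>Complete star-omega semiring: (S,S) is a complete semiring-semimodule pair;
  the infinite product of s_1 s_2 ... is ip s with s j = s_(j+1).\<close>
definition complete_star_omega_semiring ::
  "'s::semiring_1 csum_op \<Rightarrow> ((nat \<Rightarrow> 's) \<Rightarrow> 's) \<Rightarrow> bool" where
  "complete_star_omega_semiring cs ip \<longleftrightarrow>
     complete_semiring cs \<and>
     (\<forall>s. ip s = s 0 * ip (\<lambda>j. s (Suc j))) \<and>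
     (\<forall>s c. strict_mono c \<and> c 0 = 0 \<longrightarrow>
        ip s = ip (\<lambda>j. prod_list (map s [c j..<c (Suc j)]))) \<and>
     (\<forall>(Is :: nat \<Rightarrow> idx set) (f :: nat \<Rightarrow> idx \<Rightarrow> 's).
        ip (\<lambda>j. cs (f j) (Is j)) =
        gsum cs (\<lambda>\<sigma>. ip (\<lambda>j. f j (\<sigma> j))) {\<sigma>. \<forall>j. \<sigma> j \<in> Is j})"

definition s_zero :: "'a list \<Rightarrow> 's::zero" where
  "s_zero = (\<lambda>_. 0)"

definition s_one :: "'a list \<Rightarrow> 's::semiring_1" where
  "s_one = (\<lambda>w. if w = [] then 1 else 0)"

definition s_mult :: "('a list \<Rightarrow> 's::semiring_1) \<Rightarrow> ('a list \<Rightarrow> 's) \<Rightarrow> 'a list \<Rightarrow> 's" where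
  "s_mult r1 r2 = (\<lambda>w. \<Sum>k\<in>{0..length w}. r1 (take k w) * r2 (drop k w))"

definition s_act :: "'s::semiring_1 csum_op \<Rightarrow> ('a list \<Rightarrow> 's) \<Rightarrow> ((nat \<Rightarrow> 'a) \<Rightarrow> 's)
                      \<Rightarrow> (nat \<Rightarrow> 'a) \<Rightarrow> 's" where
  "s_act cs r s = (\<lambda>w. gsum cs (\<lambda>k::nat. r (map w [0..<k]) * s (\<lambda>i. w (k + i))) UNIV)"

definition factorization :: "(nat \<Rightarrow> 'a list) \<Rightarrow> (nat \<Rightarrow> 'a) \<Rightarrow> bool" where
  "factorization u w \<longleftrightarrow>
     (let c = (\<lambda>j. \<Sum>i<j. length (u i))
      in (\<forall>j. u j = map w [c j..<c (Suc j)]) \<and> (\<forall>k. \<exists>j. k \<le> c j))"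

definition s_iprod :: "'s::semiring_1 csum_op \<Rightarrow> ((nat \<Rightarrow> 's) \<Rightarrow> 's)
                        \<Rightarrow> (nat \<Rightarrow> 'a list \<Rightarrow> 's) \<Rightarrow> (nat \<Rightarrow> 'a) \<Rightarrow> 's" where
  "s_iprod cs ip r = (\<lambda>w. gsum cs (\<lambda>u. ip (\<lambda>j. r j (u j))) {u. factorization u w})"

text \<open>Series in S<Sigma \<union> {epsilon}>.\<close>
definition in_S_eps :: "('a list \<Rightarrow> 's::zero) \<Rightarrow> bool" where
  "in_S_eps r \<longleftrightarrow> (\<forall>w. r w \<noteq> 0 \<longrightarrow> length w \<le> 1)"

section \<open>n x n matrices (indices 1..n) over finite-word series\<close>

type_synonym ('a, 's) blk = "nat \<Rightarrow> nat \<Rightarrow> 'a list \<Rightarrow> 's"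

definition m_mult :: "nat \<Rightarrow> ('a, 's::semiring_1) blk \<Rightarrow> ('a, 's) blk \<Rightarrow> ('a, 's) blk" where
  "m_mult n A B = (\<lambda>i j w. \<Sum>k\<in>{1..n}. s_mult (A i k) (B k j) w)"

definition m_one :: "('a, 's::semiring_1) blk" where
  "m_one = (\<lambda>i j. if i = j then s_one else s_zero)"

definition m_zero :: "('a, 's::semiring_1) blk" where
  "m_zero = (\<lambda>i j. s_zero)"

definition m_prod :: "nat \<Rightarrow> ('a, 's::semiring_1) blk list \<Rightarrow> ('a, 's) blk" where
  "m_prod n As = foldr (m_mult n) As m_one"

definition blk_eq :: "nat \<Rightarrow> ('a, 's) blk \<Rightarrow> ('a, 's) blk \<Rightarrow> bool" where
  "blk_eq n A B \<longleftrightarrow> (\<forall>i\<in>{1..n}. \<forall>j\<in>{1..n}. A i j = B i j)"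

definition m_act :: "'s::semiring_1 csum_op \<Rightarrow> nat \<Rightarrow> ('a, 's) blk
                     \<Rightarrow> (nat \<Rightarrow> (nat \<Rightarrow> 'a) \<Rightarrow> 's) \<Rightarrow> nat \<Rightarrow> (nat \<Rightarrow> 'a) \<Rightarrow> 's" where
  "m_act cs n A z = (\<lambda>i w. \<Sum>k\<in>{1..n}. s_act cs (A i k) (z k) w)"

definition r_mult :: "nat \<Rightarrow> (nat \<Rightarrow> 'a list \<Rightarrow> 's::semiring_1) \<Rightarrow> ('a, 's) blk
                      \<Rightarrow> nat \<Rightarrow> 'a list \<Rightarrow> 's" where
  "r_mult n v A = (\<lambda>j w. \<Sum>i\<in>{1..n}. s_mult (v i) (A i j) w)"

definition rc_mult :: "nat \<Rightarrow> (nat \<Rightarrow> 'a list \<Rightarrow> 's::semiring_1) \<Rightarrow> (nat \<Rightarrow> 'a list \<Rightarrow> 's)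
                       \<Rightarrow> 'a list \<Rightarrow> 's" where
  "rc_mult n v u = (\<lambda>w. \<Sum>j\<in>{1..n}. s_mult (v j) (u j) w)"

definition r_act :: "'s::semiring_1 csum_op \<Rightarrow> nat \<Rightarrow> (nat \<Rightarrow> 'a list \<Rightarrow> 's)
                     \<Rightarrow> (nat \<Rightarrow> (nat \<Rightarrow> 'a) \<Rightarrow> 's) \<Rightarrow> (nat \<Rightarrow> 'a) \<Rightarrow> 's" where
  "r_act cs n v z = (\<lambda>w. \<Sum>i\<in>{1..n}. s_act cs (v i) (z i) w)"

text \<open>M \<pi>1 \<pi>2 is the block M_{\<pi>1,\<pi>2}; M [p] \<pi> is M_{p,\<pi>}.\<close>
definition pushdown_matrix :: "nat \<Rightarrow> ('g list \<Rightarrow> 'g list \<Rightarrow> ('a, 's::semiring_1) blk) \<Rightarrow> bool" where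
  "pushdown_matrix n M \<longleftrightarrow>
     (\<forall>p. finite {\<pi>. \<not> blk_eq n (M [p] \<pi>) m_zero}) \<and>
     (\<forall>p \<pi> \<pi>'. blk_eq n (M (p # \<pi>') (\<pi> @ \<pi>')) (M [p] \<pi>)) \<and>
     (\<forall>\<pi>1 \<pi>2. \<not> (\<exists>p \<pi> \<pi>'. \<pi>1 = p # \<pi>' \<and> \<pi>2 = \<pi> @ \<pi>') \<longrightarrow> blk_eq n (M \<pi>1 \<pi>2) m_zero)"

definition omega_pda ::
  "nat \<Rightarrow> ('g list \<Rightarrow> 'g list \<Rightarrow> ('a, 's::semiring_1) blk) \<Rightarrow> (nat \<Rightarrow> 'a list \<Rightarrow> 's)
   \<Rightarrow> (nat \<Rightarrow> 'a list \<Rightarrow> 's) \<Rightarrow> 'g \<Rightarrow> nat \<Rightarrow> bool" where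
  "omega_pda n M I P p0 l \<longleftrightarrow>
     1 \<le> n \<and> l \<le> n \<and> pushdown_matrix n M \<and>
     (\<forall>\<pi>1 \<pi>2. \<forall>i\<in>{1..n}. \<forall>j\<in>{1..n}. in_S_eps (M \<pi>1 \<pi>2 i j)) \<and>
     (\<forall>i\<in>{1..n}. in_S_eps (I i) \<and> in_S_eps (P i))"

definition M_mult :: "'s::semiring_1 csum_op \<Rightarrow> nat \<Rightarrow> ('g list \<Rightarrow> 'g list \<Rightarrow> ('a, 's) blk)
     \<Rightarrow> ('g list \<Rightarrow> 'g list \<Rightarrow> ('a, 's) blk) \<Rightarrow> 'g list \<Rightarrow> 'g list \<Rightarrow> ('a, 's) blk" where
  "M_mult cs n A B = (\<lambda>\<pi>1 \<pi>2 i j w. gsum cs (\<lambda>\<pi>. m_mult n (A \<pi>1 \<pi>) (B \<pi> \<pi>2) i j w) UNIV)"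

definition M_one :: "'g list \<Rightarrow> 'g list \<Rightarrow> ('a, 's::semiring_1) blk" where
  "M_one = (\<lambda>\<pi>1 \<pi>2. if \<pi>1 = \<pi>2 then m_one else m_zero)"

primrec M_pow :: "'s::semiring_1 csum_op \<Rightarrow> nat \<Rightarrow> ('g list \<Rightarrow> 'g list \<Rightarrow> ('a, 's) blk)
     \<Rightarrow> nat \<Rightarrow> 'g list \<Rightarrow> 'g list \<Rightarrow> ('a, 's) blk" where
  "M_pow cs n M 0 = M_one"
| "M_pow cs n M (Suc m) = M_mult cs n (M_pow cs n M m) M"

definition M_star :: "'s::semiring_1 csum_op \<Rightarrow> nat \<Rightarrow> ('g list \<Rightarrow> 'g list \<Rightarrow> ('a, 's) blk)
     \<Rightarrow> 'g list \<Rightarrow> 'g list \<Rightarrow> ('a, 's) blk" where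
  "M_star cs n M = (\<lambda>\<pi>1 \<pi>2 i j w. gsum cs (\<lambda>m::nat. M_pow cs n M m \<pi>1 \<pi>2 i j w) UNIV)"

text \<open>P_l, with j_(t+1) written js t.\<close>
definition P_l :: "nat \<Rightarrow> nat \<Rightarrow> (nat \<Rightarrow> nat) set" where
  "P_l n l = {js. (\<forall>t. js t \<in> {1..n}) \<and> infinite {t. js t \<le> l}}"

text \<open>M^{omega,l}: (M_omega cs ip n l M \<pi> i) is ((M^{omega,l})_\<pi>)_i; \<pi>_(t+1) is \<pi>s t.\<close>
definition M_omega :: "'s::semiring_1 csum_op \<Rightarrow> ((nat \<Rightarrow> 's) \<Rightarrow> 's) \<Rightarrow> nat \<Rightarrow> nat
     \<Rightarrow> ('g list \<Rightarrow> 'g list \<Rightarrow> ('a, 's) blk) \<Rightarrow> 'g list \<Rightarrow> nat \<Rightarrow> (nat \<Rightarrow> 'a) \<Rightarrow> 's" where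
  "M_omega cs ip n l M = (\<lambda>\<pi> i w.
     gsum cs (\<lambda>\<pi>s :: nat \<Rightarrow> 'g list.
       gsum cs (\<lambda>js.
         s_iprod cs ip (\<lambda>t. M (if t = 0 then \<pi> else \<pi>s (t - 1)) (\<pi>s t)
                               (if t = 0 then i else js (t - 1)) (js t)) w)
       (P_l n l)) UNIV)"

end

theory Submission
  imports Defs "HOL-Library.Countable"
begin


definition embT :: "'i itself \<Rightarrow> bool" where
  "embT _ \<longleftrightarrow> (\<exists>g::'i \<Rightarrow> idx. inj g)"

lemma embT_countable[simp]: "embT TYPE('i::countable)"
  unfolding embT_def by (rule exI[of _ "\<lambda>x _. to_nat x"]) (auto simp: inj_def fun_eq_iff)

lemma embT_fun[simp]: "embT TYPE(nat \<Rightarrow> 'i::countable)"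
  unfolding embT_def by (rule exI[of _ "\<lambda>x k. to_nat (x k)"]) (auto simp: inj_def fun_eq_iff)

lemma embT_prod[simp]:
  assumes "embT TYPE('a)" "embT TYPE('b)" shows "embT TYPE('a \<times> 'b)"
proof -
  obtain g :: "'a \<Rightarrow> idx" where g: "inj g" using assms(1) unfolding embT_def by blast
  obtain h :: "'b \<Rightarrow> idx" where h: "inj h" using assms(2) unfolding embT_def by blast
  have "inj (\<lambda>(a,b) k. prod_encode (g a k, h b k))"
  proof (rule injI, clarsimp)
    fix a b a' b' assume "(\<lambda>k. prod_encode (g a k, h b k)) = (\<lambda>k. prod_encode (g a' k, h b' k))"
    hence "\<forall>k. g a k = g a' k \<and> h b k = h b' k"
      by (metis prod_encode_eq prod.inject)
    hence "g a = g a'" "h b = h b'" by auto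
    thus "a = a' \<and> b = b'" using g h by (auto dest: injD)
  qed
  thus ?thesis unfolding embT_def by blast
qed

lemma embT_inj_on: "embT TYPE('i) \<Longrightarrow> \<exists>g::'i \<Rightarrow> idx. inj_on g A"
proof -
  assume "embT TYPE('i)"
  then obtain g :: "'i \<Rightarrow> idx" where "inj g" unfolding embT_def by blast
  thus ?thesis using inj_on_subset[OF _ subset_UNIV] by blast
qed

locale csr =
  fixes cs :: "'s::semiring_1 csum_op"
  assumes csr: "complete_semiring cs"
begin

lemmas axs = csr[unfolded complete_semiring_def]
lemmas ax = axs[THEN conjunct1] axs[THEN conjunct2, THEN conjunct1]
  axs[THEN conjunct2, THEN conjunct2, THEN conjunct1]
  axs[THEN conjunct2, THEN conjunct2, THEN conjunct2, THEN conjunct1]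
  axs[THEN conjunct2, THEN conjunct2, THEN conjunct2, THEN conjunct2, THEN conjunct1]
  axs[THEN conjunct2, THEN conjunct2, THEN conjunct2, THEN conjunct2, THEN conjunct2, THEN conjunct1]
  axs[THEN conjunct2, THEN conjunct2, THEN conjunct2, THEN conjunct2, THEN conjunct2, THEN conjunct2]

lemma cs_cong: "(\<And>i. i \<in> I \<Longrightarrow> f i = g i) \<Longrightarrow> cs f I = cs g I"
  using ax(1) by blast

lemma cs_empty: "cs f {} = 0"
  using ax(2) by blast

lemma cs_single: "cs f {i} = f i"
  using ax(3) by blast

lemma cs_two: "i \<noteq> j \<Longrightarrow> cs f {i, j} = f i + f j"
  using ax(4) by blast

lemma cs_part: "I = (\<Union>j\<in>J. Q j) \<Longrightarrow> (\<And>j j'. j\<in>J \<Longrightarrow> j'\<in>J \<Longrightarrow> j \<noteq> j' \<Longrightarrow> Q j \<inter> Q j' = {})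
        \<Longrightarrow> cs f I = cs (\<lambda>j. cs f (Q j)) J"
  using ax(5) by blast

lemma cs_distr_r: "cs (\<lambda>i. f i * c) I = cs f I * c"
  using ax(6) by blast

lemma cs_distr_l: "cs (\<lambda>i. c * f i) I = c * cs f I"
  using ax(7) by blast

lemma cs_reindex: "inj_on h J \<Longrightarrow> cs f (h ` J) = cs (\<lambda>j. f (h j)) J"
proof -
  assume h: "inj_on h J"
  have "cs f (h ` J) = cs (\<lambda>j. cs f {h j}) J"
    by (rule cs_part) (use h in \<open>auto dest: inj_onD\<close>)
  thus ?thesis by (simp add: cs_single)
qed

lemma gsum_alt:
  assumes h: "inj_on (h::'i \<Rightarrow> idx) A"
  shows "gsum cs f A = cs (\<lambda>u. f (the_inv_into A h u)) (h ` A)"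
proof -
  define g where "g = (SOME g :: 'i \<Rightarrow> idx. inj_on g A)"
  have g: "inj_on g A" unfolding g_def using someI_ex[of "\<lambda>g::'i\<Rightarrow>idx. inj_on g A"] h by blast
  define \<phi> where "\<phi> = (\<lambda>u. h (the_inv_into A g u))"
  have "inj_on (h \<circ> the_inv_into A g) (g ` A)"
    by (rule comp_inj_on) (simp_all add: inj_on_the_inv_into g h)
  hence phi: "inj_on \<phi> (g ` A)" unfolding \<phi>_def comp_def .
  have im: "\<phi> ` (g ` A) = h ` A" unfolding \<phi>_def using g by (auto simp: the_inv_into_f_f image_iff)
  have "cs (\<lambda>u. f (the_inv_into A h u)) (h ` A) = cs (\<lambda>u. f (the_inv_into A h u)) (\<phi> ` (g ` A))"
    by (simp add: im)
  also have "\<dots> = cs (\<lambda>u. f (the_inv_into A h (\<phi> u))) (g ` A)" by (rule cs_reindex[OF phi])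
  also have "\<dots> = cs (\<lambda>u. f (the_inv_into A g u)) (g ` A)"
    by (rule cs_cong) (auto simp: \<phi>_def the_inv_into_f_f[OF h] the_inv_into_f_f[OF g])
  finally show ?thesis unfolding gsum_def g_def Let_def by simp
qed

lemma gsum_cong:
  assumes "embT TYPE('i)" "\<And>a. a \<in> A \<Longrightarrow> f a = g a"
  shows "gsum cs f (A::'i set) = gsum cs g A"
proof -
  obtain h :: "'i \<Rightarrow> idx" where h: "inj_on h A" using embT_inj_on[OF assms(1)] by blast
  show ?thesis unfolding gsum_alt[OF h]
    by (rule cs_cong) (auto simp: the_inv_into_f_f[OF h] assms(2))
qed

lemma gsum_reindex:
  assumes "embT TYPE('i)" "inj_on (k::'j \<Rightarrow> 'i) B"
  shows "gsum cs f (k ` B) = gsum cs (\<lambda>b. f (k b)) B"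
proof -
  obtain h :: "'i \<Rightarrow> idx" where h: "inj_on h (k ` B)" using embT_inj_on[OF assms(1)] by blast
  have hk: "inj_on (h \<circ> k) B" by (rule comp_inj_on[OF assms(2) h])
  have hk': "\<And>b. b\<in>B \<Longrightarrow> the_inv_into B (h \<circ> k) (h (k b)) = b" using the_inv_into_f_f[OF hk] by simp
  show ?thesis unfolding gsum_alt[OF h] gsum_alt[OF hk] image_comp[symmetric]
    by (rule cs_cong) (auto simp: the_inv_into_f_f[OF h] hk')
qed

lemma gsum_part:
  assumes "embT TYPE('i)" "embT TYPE('j)"
    and disj: "\<And>j j'. j \<in> J \<Longrightarrow> j' \<in> J \<Longrightarrow> j \<noteq> j' \<Longrightarrow> Q j \<inter> Q j' = {}"
  shows "gsum cs f (\<Union>j\<in>(J::'j set). (Q j :: 'i set)) = gsum cs (\<lambda>j. gsum cs f (Q j)) J"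
proof -
  define U where "U = (\<Union>j\<in>J. Q j)"
  obtain g :: "'i \<Rightarrow> idx" where g: "inj_on g U" using embT_inj_on[OF assms(1)] by blast
  obtain e :: "'j \<Rightarrow> idx" where e: "inj_on e J" using embT_inj_on[OF assms(2)] by blast
  have gQ: "inj_on g (Q j)" if "j \<in> J" for j by (rule inj_on_subset[OF g]) (use that in \<open>auto simp: U_def\<close>)
  have gU: "\<And>x j. x \<in> Q j \<Longrightarrow> j\<in>J \<Longrightarrow> the_inv_into U g (g x) = x"
    by (rule the_inv_into_f_f[OF g]) (auto simp: U_def)
  have "gsum cs f U = cs (\<lambda>u. f (the_inv_into U g u)) (g ` U)" by (rule gsum_alt[OF g])
  also have "\<dots> = cs (\<lambda>u. cs (\<lambda>u. f (the_inv_into U g u)) (g ` Q (the_inv_into J e u))) (e ` J)"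
  proof (rule cs_part)
    show "g ` U = (\<Union>u\<in>e ` J. g ` Q (the_inv_into J e u))"
      by (auto simp: U_def the_inv_into_f_f[OF e])
    fix u u' assume "u \<in> e ` J" "u' \<in> e ` J" "u \<noteq> u'"
    then obtain j j' where jj: "j \<in> J" "j' \<in> J" "u = e j" "u' = e j'" "j \<noteq> j'" by auto
    hence "Q j \<inter> Q j' = {}" using disj by auto
    moreover have "Q j \<subseteq> U" "Q j' \<subseteq> U" using jj by (auto simp: U_def)
    ultimately show "g ` Q (the_inv_into J e u) \<inter> g ` Q (the_inv_into J e u') = {}"
      using jj g by (auto simp: the_inv_into_f_f[OF e] inj_on_def) blast
  qed
  also have "\<dots> = cs (\<lambda>u. gsum cs f (Q (the_inv_into J e u))) (e ` J)"
  proof (rule cs_cong)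
    fix u assume "u \<in> e ` J"
    then obtain j where j: "j \<in> J" "u = e j" by auto
    show "cs (\<lambda>u. f (the_inv_into U g u)) (g ` Q (the_inv_into J e u)) = gsum cs f (Q (the_inv_into J e u))"
      unfolding j the_inv_into_f_f[OF e j(1)] gsum_alt[OF gQ[OF j(1)]]
      by (rule cs_cong) (use j in \<open>auto simp: the_inv_into_f_f[OF gQ[OF j(1)]] gU\<close>)
  qed
  also have "\<dots> = gsum cs (\<lambda>j. gsum cs f (Q j)) J" by (rule gsum_alt[OF e, symmetric])
  finally show ?thesis unfolding U_def .
qed

lemma gsum_empty: "gsum cs f {} = 0"
  using gsum_alt[of "\<lambda>_. (\<lambda>_. 0)" "{}" f] by (simp add: cs_empty)

lemma gsum_single:
  assumes "embT TYPE('i)" shows "gsum cs f {x::'i} = f x"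
proof -
  obtain h :: "'i \<Rightarrow> idx" where h: "inj_on h {x}" using embT_inj_on[OF assms(1)] by blast
  show ?thesis unfolding gsum_alt[OF h] by (simp add: cs_single the_inv_into_f_f[OF h])
qed

lemma gsum_two:
  assumes "embT TYPE('i)" "x \<noteq> y" shows "gsum cs f {x::'i, y} = f x + f y"
proof -
  obtain h :: "'i \<Rightarrow> idx" where h: "inj_on h {x, y}" using embT_inj_on[OF assms(1)] by blast
  have "h x \<noteq> h y" using h assms(2) by (auto simp: inj_on_def)
  thus ?thesis unfolding gsum_alt[OF h] by (simp add: cs_two the_inv_into_f_f[OF h])
qed

lemma gsum_distr_r:
  assumes "embT TYPE('i)" shows "gsum cs (\<lambda>a. f a * c) (A::'i set) = gsum cs f A * c"
proof -
  obtain h :: "'i \<Rightarrow> idx" where h: "inj_on h A" using embT_inj_on[OF assms(1)] by blast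
  show ?thesis unfolding gsum_alt[OF h] by (rule cs_distr_r)
qed

lemma gsum_distr_l:
  assumes "embT TYPE('i)" shows "gsum cs (\<lambda>a. c * f a) (A::'i set) = c * gsum cs f A"
proof -
  obtain h :: "'i \<Rightarrow> idx" where h: "inj_on h A" using embT_inj_on[OF assms(1)] by blast
  show ?thesis unfolding gsum_alt[OF h] by (rule cs_distr_l)
qed

lemma gsum_zero:
  assumes "embT TYPE('i)" "\<And>a. a \<in> A \<Longrightarrow> f a = 0" shows "gsum cs f (A::'i set) = 0"
proof -
  have "gsum cs f A = gsum cs (\<lambda>a. (0::'s) * 0) A" by (rule gsum_cong) (use assms in auto)
  also have "\<dots> = gsum cs (\<lambda>a. (0::'s)) A * 0" by (rule gsum_distr_r[OF assms(1)])
  finally show ?thesis by simp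
qed

lemma gsum_Un:
  assumes "embT TYPE('i)" "A \<inter> B = {}"
  shows "gsum cs f (A \<union> (B::'i set)) = gsum cs f A + gsum cs f B"
proof -
  have e: "A \<union> B = (\<Union>b\<in>UNIV. if b then A else B)" by (simp add: UNIV_bool Un_commute)
  have d: "\<And>b b'. b \<noteq> b' \<Longrightarrow> (if b then A else B) \<inter> (if b' then A else B) = {}"
    using assms(2) by (simp add: Int_commute)
  have "gsum cs f (A \<union> B) = gsum cs (\<lambda>b. gsum cs f (if b then A else B)) UNIV"
    unfolding e by (rule gsum_part[OF assms(1) embT_countable]) (rule d)
  also have "UNIV = {True, False}" by auto
  finally show ?thesis using gsum_two[of True False] by simp
qed

lemma gsum_insert:
  assumes "embT TYPE('i)" "x \<notin> A"
  shows "gsum cs f (insert x (A::'i set)) = gsum cs f A + f x"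
  using gsum_Un[OF assms(1), of A "{x}" f] assms gsum_single[OF assms(1)] by auto

lemma gsum_finite:
  assumes "embT TYPE('i)" "finite (A::'i set)" shows "gsum cs f A = sum f A"
  using assms(2) by induct (auto simp: gsum_empty gsum_insert[OF assms(1)] add.commute)

lemma gsum_restrict:
  assumes "embT TYPE('i)" "B \<subseteq> (A::'i set)" "\<And>a. a \<in> A \<Longrightarrow> a \<notin> B \<Longrightarrow> f a = 0"
  shows "gsum cs f A = gsum cs f B"
proof -
  have "A = B \<union> (A - B)" using assms(2) by auto
  hence "gsum cs f A = gsum cs f B + gsum cs f (A - B)" using gsum_Un[OF assms(1), of B "A - B" f] by auto
  also have "gsum cs f (A - B) = 0" by (rule gsum_zero) (use assms in auto)
  finally show ?thesis by simp
qed

lemma gsum_Sigma: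
  assumes "embT TYPE('i)" "embT TYPE('j)"
  shows "gsum cs (\<lambda>a. gsum cs (f a) (B a)) (A::'i set) = gsum cs (\<lambda>p. f (fst p) (snd p)) (Sigma A (B::'i \<Rightarrow> 'j set))"
proof -
  have "Sigma A B = (\<Union>a\<in>A. Pair a ` B a)" by auto
  hence "gsum cs (\<lambda>p. f (fst p) (snd p)) (Sigma A B) = gsum cs (\<lambda>a. gsum cs (\<lambda>p. f (fst p) (snd p)) (Pair a ` B a)) A"
    using gsum_part[OF embT_prod[OF assms] assms(1), of A "\<lambda>a. Pair a ` B a"] by auto
  also have "\<dots> = gsum cs (\<lambda>a. gsum cs (f a) (B a)) A"
    by (rule gsum_cong[OF assms(1)], subst gsum_reindex[OF embT_prod[OF assms]]) (auto simp: inj_on_def)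
  finally show ?thesis by simp
qed

lemma gsum_swap:
  assumes "embT TYPE('i)" "embT TYPE('j)"
  shows "gsum cs (\<lambda>a. gsum cs (f a) B) (A::'i set) = gsum cs (\<lambda>b. gsum cs (\<lambda>a. f a b) A) (B::'j set)"
proof -
  have "gsum cs (\<lambda>a. gsum cs (f a) B) A = gsum cs (\<lambda>p. f (fst p) (snd p)) (A \<times> B)"
    by (rule gsum_Sigma[OF assms])
  also have "A \<times> B = prod.swap ` (B \<times> A)" by auto
  also have "gsum cs (\<lambda>p. f (fst p) (snd p)) (prod.swap ` (B \<times> A)) = gsum cs (\<lambda>p. f (snd p) (fst p)) (B \<times> A)"
    by (subst gsum_reindex[OF embT_prod[OF assms]]) auto
  also have "\<dots> = gsum cs (\<lambda>b. gsum cs (\<lambda>a. f a b) A) B"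
    by (rule gsum_Sigma[OF assms(2,1), symmetric])
  finally show ?thesis .
qed

lemma gsum_add:
  assumes "embT TYPE('i)"
  shows "gsum cs (\<lambda>a. f a + g a) (A::'i set) = gsum cs f A + gsum cs g A"
proof -
  have "gsum cs (\<lambda>a. f a + g a) A = gsum cs (\<lambda>a. gsum cs (\<lambda>b. if b then f a else g a) {True,False}) A"
    by (simp add: gsum_two)
  also have "\<dots> = gsum cs (\<lambda>b. gsum cs (\<lambda>a. if b then f a else g a) A) {True,False}"
    by (rule gsum_swap[OF assms embT_countable])
  finally show ?thesis by (simp add: gsum_two)
qed

lemma gsum_sum_swap:
  assumes "embT TYPE('i)" "finite K"
  shows "gsum cs (\<lambda>a. \<Sum>k\<in>K. f a k) (A::'i set) = (\<Sum>k\<in>K. gsum cs (\<lambda>a. f a k) A)"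
  using assms(2) by induct (simp_all add: gsum_zero[OF assms(1)] gsum_add[OF assms(1)])

end



lemma map_shift_upt: "map w [K..<K + K'] = map (\<lambda>i. w (K + i)) [0..<K']"
proof -
  have "[K..<K + K'] = map (\<lambda>i. i + K) [0..<K']" by (simp add: map_add_upt add.commute)
  thus ?thesis by (simp add: add.commute)
qed

definition splits :: "'a list \<Rightarrow> ('a list \<times> 'a list) set" where
  "splits w = {(u, v). u @ v = w}"

lemma splits_eq: "splits w = (\<lambda>k. (take k w, drop k w)) ` {0..length w}"
proof -
  have "\<And>u v. u @ v = w \<Longrightarrow> \<exists>k\<in>{0..length w}. (u, v) = (take k w, drop k w)"
    by (rule_tac x="length u" in bexI) auto
  thus ?thesis unfolding splits_def by (auto simp: image_iff)
qed

lemma finite_splits[simp]: "finite (splits w)"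
  unfolding splits_eq by simp

lemma s_mult_splits: "s_mult r1 r2 w = (\<Sum>(u,v)\<in>splits w. r1 u * r2 v)"
proof -
  have inj: "inj_on (\<lambda>k. (take k w, drop k w)) {0..length w}"
    by (rule inj_onI) (metis atLeastAtMost_iff length_take min.absorb2 prod.inject)
  show ?thesis unfolding s_mult_def splits_eq sum.reindex[OF inj] by simp
qed

lemma s_mult_assoc: "s_mult (s_mult r1 r2) r3 w = s_mult r1 (s_mult r2 r3) w"
proof -
  have "s_mult (s_mult r1 r2) r3 w = (\<Sum>(u,v)\<in>splits w. (\<Sum>(a,b)\<in>splits u. r1 a * r2 b) * r3 v)"
    by (simp add: s_mult_splits[of "s_mult r1 r2"] s_mult_splits[of r1 r2])
  also have "\<dots> = (\<Sum>(u,v)\<in>splits w. \<Sum>(a,b)\<in>splits u. r1 a * r2 b * r3 v)"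
    by (simp add: sum_distrib_right case_prod_beta)
  also have "\<dots> = (\<Sum>q\<in>splits w. \<Sum>p\<in>splits (fst q). r1 (fst p) * r2 (snd p) * r3 (snd q))"
    by (simp add: case_prod_beta)
  also have "\<dots> = (\<Sum>p\<in>(SIGMA q:splits w. splits (fst q)). r1 (fst (snd p)) * r2 (snd (snd p)) * r3 (snd (fst p)))"
    by (subst sum.Sigma) (auto simp: case_prod_beta)
  also have "\<dots> = (\<Sum>p\<in>(SIGMA q:splits w. splits (snd q)). r1 (fst (fst p)) * (r2 (fst (snd p)) * r3 (snd (snd p))))"
    by (rule sum.reindex_bij_witness[where i = "\<lambda>((a,y),(b,v)). ((a@b, v), (a, b))"
          and j = "\<lambda>((u,v),(a,b)). ((a, b@v), (b, v))"])
       (auto simp: splits_def mult.assoc)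
  also have "\<dots> = (\<Sum>q\<in>splits w. \<Sum>p\<in>splits (snd q). r1 (fst q) * (r2 (fst p) * r3 (snd p)))"
    by (subst sum.Sigma) (auto simp: case_prod_beta)
  also have "\<dots> = (\<Sum>(a,y)\<in>splits w. \<Sum>(b,v)\<in>splits y. r1 a * (r2 b * r3 v))"
    by (simp add: case_prod_beta)
  also have "\<dots> = (\<Sum>(a,y)\<in>splits w. r1 a * (\<Sum>(b,v)\<in>splits y. r2 b * r3 v))"
    by (simp add: sum_distrib_left case_prod_beta)
  also have "\<dots> = s_mult r1 (s_mult r2 r3) w"
    by (simp add: s_mult_splits[of r1] s_mult_splits[of r2 r3])
  finally show ?thesis .
qed

lemma s_mult_sum_l: "s_mult (\<lambda>v. \<Sum>a\<in>A. f a v) r w = (\<Sum>a\<in>A. s_mult (f a) r w)"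
  unfolding s_mult_def by (simp add: sum_distrib_right sum.swap[of _ A])

lemma s_mult_sum_r: "s_mult r (\<lambda>v. \<Sum>a\<in>A. f a v) w = (\<Sum>a\<in>A. s_mult r (f a) w)"
  unfolding s_mult_def by (simp add: sum_distrib_left sum.swap[of _ A])

lemma s_mult_zero_l: "(\<And>v. r v = 0) \<Longrightarrow> s_mult r r' w = 0"
  unfolding s_mult_def by simp

lemma s_mult_zero_r: "(\<And>v. r' v = 0) \<Longrightarrow> s_mult r r' w = 0"
  unfolding s_mult_def by simp

lemma s_mult_one_l: "s_mult s_one r w = r w"
proof -
  have "s_mult s_one r w = (\<Sum>k\<in>{0..length w}. if k = 0 then r w else 0)"
    unfolding s_mult_def s_one_def by (rule sum.cong) auto
  thus ?thesis by simp
qed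

lemma s_mult_one_r: "s_mult r s_one w = r w"
proof -
  have "s_mult r s_one w = (\<Sum>k\<in>{0..length w}. if k = length w then r w else 0)"
    unfolding s_mult_def s_one_def by (rule sum.cong) auto
  thus ?thesis by simp
qed

context csr
begin

lemma s_mult_gsum_l:
  assumes "embT TYPE('i)"
  shows "s_mult (\<lambda>v. gsum cs (\<lambda>a. f a v) (A::'i set)) r w = gsum cs (\<lambda>a. s_mult (f a) r w) A"
  unfolding s_mult_def
  by (simp add: gsum_distr_r[OF assms, symmetric] gsum_sum_swap[OF assms])

lemma s_mult_gsum_r:
  assumes "embT TYPE('i)"
  shows "s_mult r (\<lambda>v. gsum cs (\<lambda>a. f a v) (A::'i set)) w = gsum cs (\<lambda>a. s_mult r (f a) w) A"
  unfolding s_mult_def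
  by (simp add: gsum_distr_l[OF assms, symmetric] gsum_sum_swap[OF assms])

lemma s_act_gsum_l:
  assumes "embT TYPE('i)"
  shows "s_act cs (\<lambda>v. gsum cs (\<lambda>a. f a v) (A::'i set)) z w = gsum cs (\<lambda>a. s_act cs (f a) z w) A"
  unfolding s_act_def
  by (simp add: gsum_distr_r[OF assms, symmetric] gsum_swap[OF assms embT_countable])

lemma s_act_gsum_r:
  assumes "embT TYPE('i)"
  shows "s_act cs r (\<lambda>w'. gsum cs (\<lambda>a. f a w') (A::'i set)) w = gsum cs (\<lambda>a. s_act cs r (f a) w) A"
  unfolding s_act_def
  by (simp add: gsum_distr_l[OF assms, symmetric] gsum_swap[OF assms embT_countable])

lemma s_act_sum_l:
  assumes "finite A"
  shows "s_act cs (\<lambda>v. \<Sum>a\<in>A. f a v) z w = (\<Sum>a\<in>A. s_act cs (f a) z w)"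
  unfolding s_act_def
  by (simp add: sum_distrib_right gsum_sum_swap[OF embT_countable assms])

lemma s_act_sum_r:
  assumes "finite A"
  shows "s_act cs r (\<lambda>w'. \<Sum>a\<in>A. f a w') w = (\<Sum>a\<in>A. s_act cs r (f a) w)"
  unfolding s_act_def
  by (simp add: sum_distrib_left gsum_sum_swap[OF embT_countable assms])

lemma s_act_zero_l: "(\<And>v. r v = 0) \<Longrightarrow> s_act cs r z w = 0"
  unfolding s_act_def by (rule gsum_zero) auto

lemma s_act_zero_r: "(\<And>w'. z w' = 0) \<Longrightarrow> s_act cs r z w = 0"
  unfolding s_act_def by (rule gsum_zero) auto

lemma s_act_one: "s_act cs s_one z w = z w"
proof -
  have "s_act cs s_one z w = gsum cs (\<lambda>k. s_one (map w [0..<k]) * z (\<lambda>i. w (k + i))) {0}"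
    unfolding s_act_def by (rule gsum_restrict) (auto simp: s_one_def)
  thus ?thesis by (simp add: gsum_single s_one_def)
qed

lemma s_act_assoc: "s_act cs r (s_act cs r' z) w = s_act cs (s_mult r r') z w"
proof -
  have "s_act cs r (s_act cs r' z) w =
     gsum cs (\<lambda>K. gsum cs (\<lambda>K'. r (map w [0..<K]) * (r' (map (\<lambda>i. w (K + i)) [0..<K']) * z (\<lambda>i. w (K + K' + i)))) UNIV) UNIV"
    unfolding s_act_def by (simp add: gsum_distr_l add.assoc)
  also have "\<dots> = gsum cs (\<lambda>p. r (map w [0..<fst p]) * (r' (map (\<lambda>i. w (fst p + i)) [0..<snd p]) * z (\<lambda>i. w (fst p + snd p + i)))) (UNIV \<times> UNIV)"
    by (rule gsum_Sigma) simp_all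
  also have "\<dots> = gsum cs (\<lambda>q. r (map w [0..<snd q]) * r' (map w [snd q..<fst q]) * z (\<lambda>i. w (fst q + i))) ((\<lambda>p. (fst p + snd p, fst p)) ` (UNIV \<times> UNIV))"
    by (subst gsum_reindex) (auto simp: inj_on_def map_shift_upt mult.assoc)
  also have "(\<lambda>p. (fst p + snd p, fst p)) ` (UNIV \<times> UNIV) = (SIGMA L:UNIV. {0..L::nat})"
  proof -
    have "\<And>a b::nat. b \<le> a \<Longrightarrow> (a, b) \<in> (\<lambda>p. (fst p + snd p, fst p)) ` (UNIV \<times> UNIV)"
      by (rule_tac x="(b, a - b)" in image_eqI) auto
    thus ?thesis by auto
  qed
  also have "gsum cs (\<lambda>q. r (map w [0..<snd q]) * r' (map w [snd q..<fst q]) * z (\<lambda>i. w (fst q + i))) \<dots>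
     = gsum cs (\<lambda>L. gsum cs (\<lambda>k. r (map w [0..<k]) * r' (map w [k..<L]) * z (\<lambda>i. w (L + i))) {0..L}) UNIV"
    by (rule gsum_Sigma[symmetric]) simp_all
  also have "\<dots> = s_act cs (s_mult r r') z w"
    unfolding s_act_def s_mult_def
    by (rule gsum_cong) (auto simp: gsum_finite sum_distrib_right take_map drop_map intro!: sum.cong)
  finally show ?thesis .
qed

end



context csr
begin

abbreviation "R n \<equiv> {1..(n::nat)}"

lemma m_mult_assoc: "m_mult n (m_mult n A B) C i j w = m_mult n A (m_mult n B C) i j w"
proof -
  have "m_mult n (m_mult n A B) C i j w = (\<Sum>k\<in>R n. \<Sum>k'\<in>R n. s_mult (A i k') (s_mult (B k' k) (C k j)) w)"
    unfolding m_mult_def by (simp add: s_mult_sum_l s_mult_assoc)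
  also have "\<dots> = (\<Sum>k'\<in>R n. \<Sum>k\<in>R n. s_mult (A i k') (s_mult (B k' k) (C k j)) w)"
    by (rule sum.swap)
  also have "\<dots> = m_mult n A (m_mult n B C) i j w"
    unfolding m_mult_def by (simp add: s_mult_sum_r)
  finally show ?thesis .
qed

lemma m_mult_cong: "(\<And>k. k \<in> R n \<Longrightarrow> A i k = A' i k) \<Longrightarrow> (\<And>k. k \<in> R n \<Longrightarrow> B k j = B' k j)
   \<Longrightarrow> m_mult n A B i j = m_mult n A' B' i j"
  unfolding m_mult_def by (rule ext, rule sum.cong) auto

lemma m_act_cong: "(\<And>k. k \<in> R n \<Longrightarrow> A i k = A' i k) \<Longrightarrow> (\<And>k. k \<in> R n \<Longrightarrow> z k = z' k)
   \<Longrightarrow> m_act cs n A z i = m_act cs n A' z' i"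
  unfolding m_act_def by (rule ext, rule sum.cong) auto

lemma m_act_assoc: "m_act cs n A (m_act cs n B z) i w = m_act cs n (m_mult n A B) z i w"
proof -
  have "m_act cs n A (m_act cs n B z) i w = (\<Sum>k\<in>R n. \<Sum>k'\<in>R n. s_act cs (s_mult (A i k) (B k k')) (z k') w)"
    unfolding m_act_def by (simp add: s_act_sum_r s_act_assoc)
  also have "\<dots> = (\<Sum>k'\<in>R n. \<Sum>k\<in>R n. s_act cs (s_mult (A i k) (B k k')) (z k') w)"
    by (rule sum.swap)
  also have "\<dots> = m_act cs n (m_mult n A B) z i w"
    unfolding m_act_def m_mult_def by (simp add: s_act_sum_l)
  finally show ?thesis .
qed

lemma m_act_one: "i \<in> R n \<Longrightarrow> m_act cs n m_one z i w = z i w"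
proof -
  assume i: "i \<in> R n"
  have "m_act cs n m_one z i w = (\<Sum>k\<in>R n. if k = i then z i w else 0)"
    unfolding m_act_def m_one_def
    by (rule sum.cong) (auto simp: s_act_one s_zero_def intro: s_act_zero_l)
  thus ?thesis using i by simp
qed

lemma m_mult_one_l: "i \<in> R n \<Longrightarrow> m_mult n m_one A i j w = A i j w"
proof -
  assume i: "i \<in> R n"
  have "m_mult n m_one A i j w = (\<Sum>k\<in>R n. if k = i then A i j w else 0)"
    unfolding m_mult_def m_one_def
    by (rule sum.cong) (auto simp: s_mult_one_l s_zero_def intro: s_mult_zero_l)
  thus ?thesis using i by simp
qed

lemma m_mult_one_r: "j \<in> R n \<Longrightarrow> m_mult n A m_one i j w = A i j w"
proof -
  assume j: "j \<in> R n"
  have "m_mult n A m_one i j w = (\<Sum>k\<in>R n. if k = j then A i j w else 0)"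
    unfolding m_mult_def m_one_def
    by (rule sum.cong) (auto simp: s_mult_one_r s_zero_def intro: s_mult_zero_r)
  thus ?thesis using j by simp
qed

lemma m_mult_zero_l: "(\<And>k v. k \<in> R n \<Longrightarrow> A i k v = 0) \<Longrightarrow> m_mult n A B i j w = 0"
  unfolding m_mult_def by (rule sum.neutral) (auto intro: s_mult_zero_l)

lemma m_act_zero_l: "(\<And>k v. k \<in> R n \<Longrightarrow> A i k v = 0) \<Longrightarrow> m_act cs n A z i w = 0"
  unfolding m_act_def by (rule sum.neutral) (auto intro: s_act_zero_l)

lemma m_mult_gsum_l:
  assumes "embT TYPE('i)"
  shows "m_mult n (\<lambda>i k v. gsum cs (\<lambda>a. F a i k v) (A::'i set)) B i j w = gsum cs (\<lambda>a. m_mult n (F a) B i j w) A"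
  unfolding m_mult_def by (simp add: s_mult_gsum_l[OF assms] gsum_sum_swap[OF assms])

lemma m_mult_gsum_r:
  assumes "embT TYPE('i)"
  shows "m_mult n B (\<lambda>i k v. gsum cs (\<lambda>a. F a i k v) (A::'i set)) i j w = gsum cs (\<lambda>a. m_mult n B (F a) i j w) A"
  unfolding m_mult_def by (simp add: s_mult_gsum_r[OF assms] gsum_sum_swap[OF assms])

lemma m_act_gsum_l:
  assumes "embT TYPE('i)"
  shows "m_act cs n (\<lambda>i k v. gsum cs (\<lambda>a. F a i k v) (A::'i set)) z i w = gsum cs (\<lambda>a. m_act cs n (F a) z i w) A"
  unfolding m_act_def by (simp add: s_act_gsum_l[OF assms] gsum_sum_swap[OF assms])

lemma m_act_sum_r:
  assumes "finite J"
  shows "m_act cs n A (\<lambda>k w'. \<Sum>j\<in>J. f j k w') i w = (\<Sum>j\<in>J. m_act cs n A (f j) i w)"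
  unfolding m_act_def by (simp add: s_act_sum_r[OF assms] sum.swap[of _ J])

lemma m_mult_sum_l:
  assumes "finite J"
  shows "m_mult n (\<lambda>i k v. \<Sum>a\<in>J. F a i k v) B i j w = (\<Sum>a\<in>J. m_mult n (F a) B i j w)"
  unfolding m_mult_def by (simp add: s_mult_sum_l sum.swap[of _ J])

lemma m_mult_sum_r:
  assumes "finite J"
  shows "m_mult n B (\<lambda>i k v. \<Sum>a\<in>J. F a i k v) i j w = (\<Sum>a\<in>J. m_mult n B (F a) i j w)"
  unfolding m_mult_def by (simp add: s_mult_sum_r sum.swap[of _ J])

end

definition eqR :: "nat \<Rightarrow> ('g list \<Rightarrow> 'g list \<Rightarrow> ('a, 's) blk) \<Rightarrow> ('g list \<Rightarrow> 'g list \<Rightarrow> ('a, 's) blk) \<Rightarrow> bool" where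
  "eqR n A B \<longleftrightarrow> (\<forall>\<pi>1 \<pi>2 i j. i \<in> {1..n} \<longrightarrow> j \<in> {1..n} \<longrightarrow> A \<pi>1 \<pi>2 i j = B \<pi>1 \<pi>2 i j)"

lemma eqR_trans: "eqR n A B \<Longrightarrow> eqR n B C \<Longrightarrow> eqR n A C"
  unfolding eqR_def by auto

lemma eqR_sym: "eqR n A B \<Longrightarrow> eqR n B A"
  unfolding eqR_def by auto

lemma eqR_refl: "eqR n A A"
  unfolding eqR_def by auto

definition vstep :: "'g list \<Rightarrow> 'g list \<Rightarrow> bool" where
  "vstep \<pi>1 \<pi>2 \<longleftrightarrow> \<pi>1 \<noteq> [] \<and> (\<exists>\<delta>. \<pi>2 = \<delta> @ tl \<pi>1)"

locale pda = csr cs for cs :: "'s::semiring_1 csum_op" +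
  fixes ip :: "(nat \<Rightarrow> 's) \<Rightarrow> 's" and n l :: nat
    and M :: "'g::finite list \<Rightarrow> 'g list \<Rightarrow> nat \<Rightarrow> nat \<Rightarrow> 'a::finite list \<Rightarrow> 's"
  assumes cso: "complete_star_omega_semiring cs ip"
    and pdm: "pushdown_matrix n M"
begin

lemma M_mult_cong: "eqR n A A' \<Longrightarrow> eqR n B B' \<Longrightarrow> eqR n (M_mult cs n A B) (M_mult cs n A' B')"
  for A A' B B' :: "'g list \<Rightarrow> 'g list \<Rightarrow> ('a, 's) blk"
  unfolding eqR_def M_mult_def
  by (intro allI impI ext gsum_cong) (auto intro!: fun_cong[OF m_mult_cong])

lemma M_mult_assoc: "M_mult cs n (M_mult cs n A B) C = M_mult cs n A (M_mult cs n B C)"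
  for A B C :: "'g list \<Rightarrow> 'g list \<Rightarrow> ('a, 's) blk"
proof (intro ext)
  fix \<pi>1 \<pi>2 i j w
  have "M_mult cs n (M_mult cs n A B) C \<pi>1 \<pi>2 i j w =
    gsum cs (\<lambda>\<pi>. gsum cs (\<lambda>\<pi>'. m_mult n (A \<pi>1 \<pi>') (m_mult n (B \<pi>' \<pi>) (C \<pi> \<pi>2)) i j w) UNIV) UNIV"
    unfolding M_mult_def by (simp add: m_mult_gsum_l m_mult_assoc)
  also have "\<dots> = gsum cs (\<lambda>\<pi>'. gsum cs (\<lambda>\<pi>. m_mult n (A \<pi>1 \<pi>') (m_mult n (B \<pi>' \<pi>) (C \<pi> \<pi>2)) i j w) UNIV) UNIV"
    by (rule gsum_swap) simp_all
  also have "\<dots> = M_mult cs n A (M_mult cs n B C) \<pi>1 \<pi>2 i j w"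
    unfolding M_mult_def by (simp add: m_mult_gsum_r)
  finally show "M_mult cs n (M_mult cs n A B) C \<pi>1 \<pi>2 i j w = M_mult cs n A (M_mult cs n B C) \<pi>1 \<pi>2 i j w" .
qed

lemma M_mult_one_l: "eqR n (M_mult cs n M_one A) A"
  for A :: "'g list \<Rightarrow> 'g list \<Rightarrow> ('a, 's) blk"
  unfolding eqR_def
proof (intro allI impI ext)
  fix \<pi>1 \<pi>2 i j w assume i: "i \<in> R n" and j: "j \<in> R n"
  have "M_mult cs n M_one A \<pi>1 \<pi>2 i j w = gsum cs (\<lambda>\<pi>. m_mult n (M_one \<pi>1 \<pi>) (A \<pi> \<pi>2) i j w) {\<pi>1}"
    unfolding M_mult_def
    by (rule gsum_restrict) (auto simp: M_one_def m_zero_def s_zero_def intro!: m_mult_zero_l)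
  also have "\<dots> = A \<pi>1 \<pi>2 i j w" by (simp add: gsum_single M_one_def m_mult_one_l[OF i])
  finally show "M_mult cs n M_one A \<pi>1 \<pi>2 i j w = A \<pi>1 \<pi>2 i j w" .
qed

lemma M_mult_one_r: "eqR n (M_mult cs n A M_one) A"
  for A :: "'g list \<Rightarrow> 'g list \<Rightarrow> ('a, 's) blk"
  unfolding eqR_def
proof (intro allI impI ext)
  fix \<pi>1 \<pi>2 i j w assume i: "i \<in> R n" and j: "j \<in> R n"
  have "M_mult cs n A M_one \<pi>1 \<pi>2 i j w = gsum cs (\<lambda>\<pi>. m_mult n (A \<pi>1 \<pi>) (M_one \<pi> \<pi>2) i j w) {\<pi>2}"
    unfolding M_mult_def
    by (rule gsum_restrict) (auto simp: M_one_def m_zero_def s_zero_def m_mult_def s_mult_def)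
  also have "\<dots> = A \<pi>1 \<pi>2 i j w" by (simp add: gsum_single M_one_def m_mult_one_r[OF j])
  finally show "M_mult cs n A M_one \<pi>1 \<pi>2 i j w = A \<pi>1 \<pi>2 i j w" .
qed

lemma M_pow_left: "eqR n (M_pow cs n M (Suc a)) (M_mult cs n M (M_pow cs n M a))"
proof (induction a)
  case 0
  show ?case using M_mult_one_l M_mult_one_r by (simp add: eqR_def)
next
  case (Suc a)
  have "eqR n (M_pow cs n M (Suc (Suc a))) (M_mult cs n (M_mult cs n M (M_pow cs n M a)) M)"
    by (subst M_pow.simps(2)) (rule M_mult_cong[OF Suc eqR_refl])
  thus ?case by (simp add: M_mult_assoc)
qed

lemma pd_zero:
  assumes "\<not> vstep \<pi>1 \<pi>2" "i \<in> R n" "j \<in> R n"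
  shows "M \<pi>1 \<pi>2 i j v = 0"
proof -
  have "\<not> (\<exists>p \<pi> \<pi>'. \<pi>1 = p # \<pi>' \<and> \<pi>2 = \<pi> @ \<pi>')"
    using assms(1) unfolding vstep_def by auto
  hence "blk_eq n (M \<pi>1 \<pi>2) m_zero" using pdm unfolding pushdown_matrix_def by blast
  thus ?thesis using assms(2,3) unfolding blk_eq_def m_zero_def s_zero_def by simp
qed

lemma pd_lift:
  assumes "\<pi>1 \<noteq> []" "i \<in> R n" "j \<in> R n"
  shows "M (\<pi>1 @ \<beta>) (\<pi>2 @ \<beta>) i j = M \<pi>1 \<pi>2 i j"
proof (cases "vstep \<pi>1 \<pi>2")
  case True
  then obtain q g \<delta> where q: "\<pi>1 = q # g" "\<pi>2 = \<delta> @ g" unfolding vstep_def by (cases \<pi>1) auto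
  have "blk_eq n (M (q # (g @ \<beta>)) (\<delta> @ (g @ \<beta>))) (M [q] \<delta>)"
    "blk_eq n (M (q # g) (\<delta> @ g)) (M [q] \<delta>)" using pdm unfolding pushdown_matrix_def by blast+
  thus ?thesis using assms q unfolding blk_eq_def by simp
next
  case False
  have "\<not> vstep (\<pi>1 @ \<beta>) (\<pi>2 @ \<beta>)"
    using False assms(1) unfolding vstep_def by auto
  thus ?thesis using pd_zero[OF False assms(2,3)] pd_zero[OF _ assms(2,3)] by (auto intro!: ext)
qed

lemma lift_gsum:
  assumes "\<gamma> \<noteq> []" "i \<in> R n"
    and G0: "\<And>\<sigma> k. k \<in> R n \<Longrightarrow> (\<And>v. M (\<gamma> @ \<beta>) \<sigma> i k v = 0) \<Longrightarrow> G \<sigma> k (M (\<gamma> @ \<beta>) \<sigma> i k) = 0"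
  shows "gsum cs (\<lambda>\<sigma>. \<Sum>k\<in>R n. G \<sigma> k (M (\<gamma> @ \<beta>) \<sigma> i k)) UNIV
       = gsum cs (\<lambda>\<sigma>'. \<Sum>k\<in>R n. G (\<sigma>' @ \<beta>) k (M \<gamma> \<sigma>' i k)) UNIV"
proof -
  have "gsum cs (\<lambda>\<sigma>. \<Sum>k\<in>R n. G \<sigma> k (M (\<gamma> @ \<beta>) \<sigma> i k)) UNIV
      = gsum cs (\<lambda>\<sigma>. \<Sum>k\<in>R n. G \<sigma> k (M (\<gamma> @ \<beta>) \<sigma> i k)) ((\<lambda>\<sigma>'. \<sigma>' @ \<beta>) ` UNIV)"
  proof (rule gsum_restrict)
    fix \<sigma> assume "\<sigma> \<notin> (\<lambda>\<sigma>'. \<sigma>' @ \<beta>) ` UNIV"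
    hence nv: "\<not> vstep (\<gamma> @ \<beta>) \<sigma>" using assms(1) unfolding vstep_def by (cases \<gamma>) auto
    show "(\<Sum>k\<in>R n. G \<sigma> k (M (\<gamma> @ \<beta>) \<sigma> i k)) = 0"
      by (rule sum.neutral) (use G0 pd_zero[OF nv assms(2)] in blast)
  qed simp_all
  also have "\<dots> = gsum cs (\<lambda>\<sigma>'. \<Sum>k\<in>R n. G (\<sigma>' @ \<beta>) k (M (\<gamma> @ \<beta>) (\<sigma>' @ \<beta>) i k)) UNIV"
    by (rule gsum_reindex) (simp_all add: inj_on_def)
  also have "\<dots> = gsum cs (\<lambda>\<sigma>'. \<Sum>k\<in>R n. G (\<sigma>' @ \<beta>) k (M \<gamma> \<sigma>' i k)) UNIV"
    by (rule gsum_cong) (simp_all add: pd_lift[OF assms(1,2)])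
  finally show ?thesis .
qed

end



context csr
begin
lemma m_mult_zero_r: "(\<And>k v. k \<in> R n \<Longrightarrow> B k j v = 0) \<Longrightarrow> m_mult n A B i j w = 0"
  unfolding m_mult_def by (rule sum.neutral) (auto intro: s_mult_zero_r)
end

context pda
begin

lemma M_pow_left': "i \<in> R n \<Longrightarrow> j \<in> R n \<Longrightarrow>
   M_pow cs n M (Suc a) \<pi>1 \<pi>2 i j w = gsum cs (\<lambda>\<sigma>. m_mult n (M \<pi>1 \<sigma>) (M_pow cs n M a \<sigma> \<pi>2) i j w) UNIV"
proof -
  assume ij: "i \<in> R n" "j \<in> R n"
  have "M_pow cs n M (Suc a) \<pi>1 \<pi>2 i j = M_mult cs n M (M_pow cs n M a) \<pi>1 \<pi>2 i j"
    using M_pow_left[of a] ij unfolding eqR_def by blast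
  from fun_cong[OF this, of w] show ?thesis by (simp add: M_mult_def)
qed

lemma Mpow_nil: "i \<in> R n \<Longrightarrow> j \<in> R n \<Longrightarrow> M_pow cs n M (Suc a) [] \<delta> i j w = 0"
  unfolding M_pow_left'
  by (rule gsum_zero) (auto intro!: m_mult_zero_l pd_zero simp: vstep_def)

lemma G_lemma:
  "i \<in> R n \<Longrightarrow> j \<in> R n \<Longrightarrow> M_pow cs n M m (\<alpha> @ \<beta>) [] i j w =
     (\<Sum>a\<le>m. m_mult n (M_pow cs n M a \<alpha> []) (M_pow cs n M (m - a) \<beta> []) i j w)"
proof (induction m arbitrary: \<alpha> i j w)
  case 0
  show ?case
  proof (cases "\<alpha> = [] \<and> \<beta> = []")
    case True thus ?thesis by (simp add: M_one_def m_mult_one_l[OF "0.prems"(1)])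
  next
    case False
    thus ?thesis
      by (auto simp: M_one_def m_zero_def s_zero_def intro: m_mult_zero_l m_mult_zero_r)
  qed
next
  case (Suc m)
  note ij = Suc.prems
  show ?case
  proof (cases "\<alpha> = []")
    case True
    have "(\<Sum>a\<le>Suc m. m_mult n (M_pow cs n M a \<alpha> []) (M_pow cs n M (Suc m - a) \<beta> []) i j w)
      = m_mult n (M_pow cs n M 0 [] []) (M_pow cs n M (Suc m) \<beta> []) i j w
        + (\<Sum>a\<le>m. m_mult n (M_pow cs n M (Suc a) [] []) (M_pow cs n M (m - a) \<beta> []) i j w)"
      unfolding True by (subst sum.atMost_Suc_shift) simp
    also have "\<dots> = M_pow cs n M (Suc m) \<beta> [] i j w"
    proof -
      have z: "\<And>a B. m_mult n (M_pow cs n M (Suc a) [] []) B i j w = 0"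
        by (rule m_mult_zero_l, erule Mpow_nil[OF ij(1)])
      show ?thesis by (simp add: z M_one_def m_mult_one_l[OF ij(1)] del: M_pow.simps(2))
    qed
    finally show ?thesis unfolding True by simp
  next
    case False
    have "M_pow cs n M (Suc m) (\<alpha> @ \<beta>) [] i j w
       = gsum cs (\<lambda>\<sigma>. \<Sum>k\<in>R n. s_mult (M (\<alpha> @ \<beta>) \<sigma> i k) (M_pow cs n M m \<sigma> [] k j) w) UNIV"
      unfolding M_pow_left'[OF ij] m_mult_def ..
    also have "\<dots> = gsum cs (\<lambda>\<sigma>'. \<Sum>k\<in>R n. s_mult (M \<alpha> \<sigma>' i k) (M_pow cs n M m (\<sigma>' @ \<beta>) [] k j) w) UNIV"
      by (rule lift_gsum[OF False ij(1)]) (simp add: s_mult_zero_l)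
    also have "\<dots> = gsum cs (\<lambda>\<sigma>'. \<Sum>a\<le>m. m_mult n (m_mult n (M \<alpha> \<sigma>') (M_pow cs n M a \<sigma>' [])) (M_pow cs n M (m - a) \<beta> []) i j w) UNIV"
    proof (rule gsum_cong)
      fix \<sigma>'
      have "(\<Sum>k\<in>R n. s_mult (M \<alpha> \<sigma>' i k) (M_pow cs n M m (\<sigma>' @ \<beta>) [] k j) w)
          = m_mult n (M \<alpha> \<sigma>') (M_pow cs n M m (\<sigma>' @ \<beta>) []) i j w" by (simp add: m_mult_def)
      also have "\<dots> = m_mult n (M \<alpha> \<sigma>') (\<lambda>k j w. \<Sum>a\<le>m. m_mult n (M_pow cs n M a \<sigma>' []) (M_pow cs n M (m - a) \<beta> []) k j w) i j w"
        by (rule fun_cong[OF m_mult_cong]) (auto intro!: ext Suc.IH ij(2))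
      also have "\<dots> = (\<Sum>a\<le>m. m_mult n (m_mult n (M \<alpha> \<sigma>') (M_pow cs n M a \<sigma>' [])) (M_pow cs n M (m - a) \<beta> []) i j w)"
        by (simp add: m_mult_sum_r m_mult_assoc)
      finally show "(\<Sum>k\<in>R n. s_mult (M \<alpha> \<sigma>' i k) (M_pow cs n M m (\<sigma>' @ \<beta>) [] k j) w) = \<dots>" .
    qed simp
    also have "\<dots> = (\<Sum>a\<le>m. gsum cs (\<lambda>\<sigma>'. m_mult n (m_mult n (M \<alpha> \<sigma>') (M_pow cs n M a \<sigma>' [])) (M_pow cs n M (m - a) \<beta> []) i j w) UNIV)"
      by (rule gsum_sum_swap) simp_all
    also have "\<dots> = (\<Sum>a\<le>m. m_mult n (M_pow cs n M (Suc a) \<alpha> []) (M_pow cs n M (m - a) \<beta> []) i j w)"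
    proof (rule sum.cong)
      fix a
      have "gsum cs (\<lambda>\<sigma>'. m_mult n (m_mult n (M \<alpha> \<sigma>') (M_pow cs n M a \<sigma>' [])) (M_pow cs n M (m - a) \<beta> []) i j w) UNIV
        = m_mult n (\<lambda>i k v. gsum cs (\<lambda>\<sigma>'. m_mult n (M \<alpha> \<sigma>') (M_pow cs n M a \<sigma>' []) i k v) UNIV) (M_pow cs n M (m - a) \<beta> []) i j w"
        by (simp add: m_mult_gsum_l)
      also have "\<dots> = m_mult n (M_pow cs n M (Suc a) \<alpha> []) (M_pow cs n M (m - a) \<beta> []) i j w"
        by (rule fun_cong[OF m_mult_cong]) (auto intro!: ext simp: M_pow_left'[OF ij(1)] simp del: M_pow.simps(2))
      finally show "gsum cs (\<lambda>\<sigma>'. m_mult n (m_mult n (M \<alpha> \<sigma>') (M_pow cs n M a \<sigma>' [])) (M_pow cs n M (m - a) \<beta> []) i j w) UNIV = \<dots>" .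
    qed simp
    also have "\<dots> = (\<Sum>a\<le>Suc m. m_mult n (M_pow cs n M a \<alpha> []) (M_pow cs n M (Suc m - a) \<beta> []) i j w)"
      by (subst sum.atMost_Suc_shift) (simp add: M_one_def False m_zero_def s_zero_def m_mult_zero_l)
    finally show ?thesis .
  qed
qed

lemma Mstar_app:
  assumes ij: "i \<in> R n" "j \<in> R n"
  shows "M_star cs n M (\<alpha> @ \<beta>) [] i j w = m_mult n (M_star cs n M \<alpha> []) (M_star cs n M \<beta> []) i j w"
proof -
  define F where "F = (\<lambda>a b. m_mult n (M_pow cs n M a \<alpha> []) (M_pow cs n M b \<beta> []) i j w)"
  have "M_star cs n M (\<alpha> @ \<beta>) [] i j w = gsum cs (\<lambda>m. gsum cs (\<lambda>a. F a (m - a)) {..m}) UNIV"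
    unfolding M_star_def F_def by (rule gsum_cong) (simp_all add: G_lemma[OF ij] gsum_finite)
  also have "\<dots> = gsum cs (\<lambda>p. F (snd p) (fst p - snd p)) (SIGMA m:UNIV. {..m})"
    by (rule gsum_Sigma) simp_all
  also have "(SIGMA m:UNIV. {..m}) = (\<lambda>p. (fst p + snd p, fst p)) ` (UNIV \<times> (UNIV::nat set))"
  proof -
    have "\<And>a b::nat. b \<le> a \<Longrightarrow> (a, b) \<in> (\<lambda>p. (fst p + snd p, fst p)) ` (UNIV \<times> UNIV)"
      by (rule_tac x="(b, a - b)" in image_eqI) auto
    thus ?thesis by auto
  qed
  also have "gsum cs (\<lambda>p. F (snd p) (fst p - snd p)) \<dots> = gsum cs (\<lambda>p. F (fst p) (snd p)) (UNIV \<times> UNIV)"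
    by (subst gsum_reindex) (auto simp: inj_on_def)
  also have "\<dots> = gsum cs (\<lambda>a. gsum cs (\<lambda>b. F a b) UNIV) UNIV"
    by (rule gsum_Sigma[symmetric]) simp_all
  also have "\<dots> = m_mult n (M_star cs n M \<alpha> []) (M_star cs n M \<beta> []) i j w"
    unfolding M_star_def F_def by (simp add: m_mult_gsum_l m_mult_gsum_r)
  finally show ?thesis .
qed

lemma Mstar_nil:
  assumes ij: "i \<in> R n" "j \<in> R n"
  shows "M_star cs n M [] [] i j w = m_one i j w"
proof -
  have "M_star cs n M [] [] i j w = gsum cs (\<lambda>m. M_pow cs n M m [] [] i j w) {0}"
    unfolding M_star_def
  proof (rule gsum_restrict)
    fix m :: nat assume "m \<notin> {0}"
    then obtain a where "m = Suc a" by (cases m) auto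
    thus "M_pow cs n M m [] [] i j w = 0" using Mpow_nil[OF ij] by simp
  qed simp_all
  thus ?thesis by (simp add: gsum_single M_one_def)
qed

lemma Mstar_prod:
  "i \<in> R n \<Longrightarrow> j \<in> R n \<Longrightarrow> M_star cs n M \<pi> [] i j w = m_prod n (map (\<lambda>p. M_star cs n M [p] []) \<pi>) i j w"
proof (induction \<pi> arbitrary: i j w)
  case Nil
  thus ?case by (simp add: Mstar_nil m_prod_def)
next
  case (Cons q \<pi>)
  have "M_star cs n M ([q] @ \<pi>) [] i j w = m_mult n (M_star cs n M [q] []) (M_star cs n M \<pi> []) i j w"
    by (rule Mstar_app[OF Cons.prems])
  also have "\<dots> = m_mult n (M_star cs n M [q] []) (m_prod n (map (\<lambda>p. M_star cs n M [p] []) \<pi>)) i j w"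
    by (rule fun_cong[OF m_mult_cong]) (auto intro!: ext Cons.IH Cons.prems)
  finally show ?case by (simp add: m_prod_def)
qed

lemma conj2:
  assumes ij: "i \<in> R n" "j \<in> R n"
  shows "M_star cs n M [p] [] i j w =
    gsum cs (\<lambda>\<pi>. m_mult n (M [p] \<pi>) (m_prod n (map (\<lambda>p. M_star cs n M [p] []) \<pi>)) i j w) UNIV"
proof -
  have U: "(UNIV::nat set) = {0} \<union> Suc ` UNIV" by (auto intro: nat.exhaust)
  have "M_star cs n M [p] [] i j w = gsum cs (\<lambda>m. M_pow cs n M m [p] [] i j w) ({0} \<union> Suc ` UNIV)"
    unfolding M_star_def by (simp only: U[symmetric])
  also have "\<dots> = gsum cs (\<lambda>m. M_pow cs n M m [p] [] i j w) (Suc ` UNIV)"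
    by (subst gsum_Un) (auto simp: gsum_single M_one_def m_zero_def s_zero_def)
  also have "\<dots> = gsum cs (\<lambda>a. gsum cs (\<lambda>\<sigma>. m_mult n (M [p] \<sigma>) (M_pow cs n M a \<sigma> []) i j w) UNIV) UNIV"
    by (subst gsum_reindex) (simp_all add: M_pow_left'[OF ij] del: M_pow.simps(2))
  also have "\<dots> = gsum cs (\<lambda>\<sigma>. gsum cs (\<lambda>a. m_mult n (M [p] \<sigma>) (M_pow cs n M a \<sigma> []) i j w) UNIV) UNIV"
    by (rule gsum_swap) simp_all
  also have "\<dots> = gsum cs (\<lambda>\<sigma>. m_mult n (M [p] \<sigma>) (M_star cs n M \<sigma> []) i j w) UNIV"
    unfolding M_star_def by (simp add: m_mult_gsum_r)
  also have "\<dots> = gsum cs (\<lambda>\<pi>. m_mult n (M [p] \<pi>) (m_prod n (map (\<lambda>p. M_star cs n M [p] []) \<pi>)) i j w) UNIV"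
    by (rule gsum_cong) (auto intro!: fun_cong[OF m_mult_cong] ext Mstar_prod ij)
  finally show ?thesis .
qed

end



definition cn :: "'b \<Rightarrow> (nat \<Rightarrow> 'b) \<Rightarrow> nat \<Rightarrow> 'b" where
  "cn a f t = (if t = 0 then a else f (t - 1))"

lemma cn_0[simp]: "cn a f 0 = a" and cn_Suc[simp]: "cn a f (Suc t) = f t"
  by (simp_all add: cn_def)

lemma cn_inj[simp]: "cn a f = cn b g \<longleftrightarrow> a = b \<and> f = g"
proof
  assume h: "cn a f = cn b g"
  have "a = b" using fun_cong[OF h, of 0] by simp
  moreover have "f = g" using fun_cong[OF h, of "Suc _"] by (intro ext) simp
  ultimately show "a = b \<and> f = g" ..
qed simp

lemma cn_surj: "cn (f 0) (\<lambda>t. f (Suc t)) = f"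
  by (rule ext) (simp add: cn_def)

lemma map_add_shift: "map (\<lambda>i. w (K + i)) [a..<b] = map w [K + a..<K + b]"
  by (induct b) auto

lemma fact_cons:
  "factorization u w \<longleftrightarrow> u 0 = map w [0..<length (u 0)] \<and>
      factorization (\<lambda>j. u (Suc j)) (\<lambda>i. w (length (u 0) + i))"
proof -
  define K where "K = length (u 0)"
  define c where "c = (\<lambda>j. \<Sum>i<j. length (u i))"
  define c' where "c' = (\<lambda>j. \<Sum>i<j. length (u (Suc i)))"
  have cS: "c (Suc j) = K + c' j" for j unfolding c_def c'_def K_def by (simp only: sum.lessThan_Suc_shift)
  have c0: "c 0 = 0" unfolding c_def by simp
  have A: "(\<forall>j. u j = map w [c j..<c (Suc j)]) \<longleftrightarrow>
     u 0 = map w [0..<K] \<and> (\<forall>j. u (Suc j) = map (\<lambda>i. w (K + i)) [c' j..<c' (Suc j)])"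
  proof -
    have "(\<forall>j. u j = map w [c j..<c (Suc j)]) \<longleftrightarrow> u 0 = map w [c 0..<c (Suc 0)] \<and> (\<forall>j. u (Suc j) = map w [c (Suc j)..<c (Suc (Suc j))])"
      by (metis not0_implies_Suc)
    thus ?thesis by (simp add: cS c0 map_add_shift c'_def)
  qed
  have B: "(\<forall>k. \<exists>j. k \<le> c j) \<longleftrightarrow> (\<forall>k. \<exists>j. k \<le> c' j)"
  proof
    assume h: "\<forall>k. \<exists>j. k \<le> c j"
    show "\<forall>k. \<exists>j. k \<le> c' j"
    proof
      fix k
      obtain j where j: "K + k \<le> c j" using h by blast
      show "\<exists>j. k \<le> c' j"
      proof (cases j)
        case 0 thus ?thesis using j c0 by (auto intro: exI[of _ 0])
      next
        case (Suc j') thus ?thesis using j cS by auto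
      qed
    qed
  next
    assume h: "\<forall>k. \<exists>j. k \<le> c' j"
    show "\<forall>k. \<exists>j. k \<le> c j"
    proof
      fix k
      obtain j where "k \<le> c' j" using h by blast
      hence "k \<le> c (Suc j)" using cS by simp
      thus "\<exists>j. k \<le> c j" ..
    qed
  qed
  show ?thesis
    unfolding factorization_def Let_def c_def[symmetric] c'_def[symmetric] K_def[symmetric]
    using A B by (simp add: c'_def)
qed

lemma Pl_cons: "js \<in> P_l n l \<longleftrightarrow> js 0 \<in> {1..n} \<and> (\<lambda>t. js (Suc t)) \<in> P_l n l"
proof -
  have "(\<forall>t. js t \<in> {1..n}) \<longleftrightarrow> js 0 \<in> {1..n} \<and> (\<forall>t. js (Suc t) \<in> {1..n})"
    by (metis not0_implies_Suc)
  moreover have "finite {t. js t \<le> l} \<longleftrightarrow> finite {t. js (Suc t) \<le> l}"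
  proof
    assume "finite {t. js t \<le> l}"
    moreover have "Suc ` {t. js (Suc t) \<le> l} \<subseteq> {t. js t \<le> l}" by auto
    ultimately have "finite (Suc ` {t. js (Suc t) \<le> l})" by (rule rev_finite_subset)
    thus "finite {t. js (Suc t) \<le> l}" by (simp add: finite_image_iff)
  next
    assume "finite {t. js (Suc t) \<le> l}"
    hence "finite (insert 0 (Suc ` {t. js (Suc t) \<le> l}))" by simp
    moreover have "{t. js t \<le> l} \<subseteq> insert 0 (Suc ` {t. js (Suc t) \<le> l})"
      by (auto simp: image_iff intro: not0_implies_Suc) (metis not0_implies_Suc)
    ultimately show "finite {t. js t \<le> l}" by (rule rev_finite_subset)
  qed
  ultimately show ?thesis unfolding P_l_def by auto
qed

lemma Pl_range: "js \<in> P_l n l \<Longrightarrow> js t \<in> {1..n}"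
  unfolding P_l_def by auto

context pda
begin

lemma ip_cons: "ip s = s 0 * ip (\<lambda>j. s (Suc j))"
  using cso unfolding complete_star_omega_semiring_def by blast

lemma ip_split: "ip s = prod_list (map s [0..<k]) * ip (\<lambda>j. s (j + k))"
proof (induction k)
  case 0 show ?case by simp
next
  case (Suc k)
  have "ip (\<lambda>j. s (j + k)) = s k * ip (\<lambda>j. s (j + Suc k))"
    using ip_cons[of "\<lambda>j. s (j + k)"] by simp
  with Suc show ?case by (simp add: mult.assoc)
qed

lemma ip_zero: "s t = 0 \<Longrightarrow> ip s = 0"
  using ip_split[of s t] ip_cons[of "\<lambda>j. s (j + t)"] by simp

abbreviation W where
  "W \<gamma> i \<pi>s js u \<equiv> ip (\<lambda>t. M (cn \<gamma> \<pi>s t) (\<pi>s t) (cn i js t) (js t) (u t))"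

definition Om :: "'g list \<Rightarrow> nat \<Rightarrow> (nat \<Rightarrow> 'g list) set \<Rightarrow> (nat \<Rightarrow> 'a) \<Rightarrow> 's" where
  "Om \<gamma> i Q w = gsum cs (\<lambda>\<pi>s. gsum cs (\<lambda>js. gsum cs (\<lambda>u. W \<gamma> i \<pi>s js u) {u. factorization u w}) (P_l n l)) Q"

lemma Om_M_omega: "M_omega cs ip n l M \<gamma> i w = Om \<gamma> i UNIV w"
  unfolding M_omega_def Om_def s_iprod_def cn_def ..

lemma Om_empty: "Om \<gamma> i {} w = 0"
  unfolding Om_def by (simp add: gsum_empty)

lemma Om_UN:
  assumes "\<And>j j'. j \<in> J \<Longrightarrow> j' \<in> J \<Longrightarrow> j \<noteq> j' \<Longrightarrow> Q j \<inter> Q j' = {}"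
  shows "Om \<gamma> i (\<Union>j\<in>(J::nat set). Q j) w = gsum cs (\<lambda>j. Om \<gamma> i (Q j) w) J"
  unfolding Om_def by (rule gsum_part) (simp_all add: assms)

lemma Om_Un:
  assumes "A \<inter> B = {}"
  shows "Om \<gamma> i (A \<union> B) w = Om \<gamma> i A w + Om \<gamma> i B w"
  unfolding Om_def by (rule gsum_Un) (simp_all add: assms)

definition valid :: "'g list \<Rightarrow> (nat \<Rightarrow> 'g list) set" where
  "valid \<gamma> = {\<pi>s. \<forall>t. vstep (cn \<gamma> \<pi>s t) (\<pi>s t)}"

lemma Om_valid:
  assumes i: "i \<in> R n"
  shows "Om \<gamma> i Q w = Om \<gamma> i (Q \<inter> valid \<gamma>) w"
  unfolding Om_def
proof (rule gsum_restrict)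
  fix \<pi>s assume "\<pi>s \<notin> Q \<inter> valid \<gamma>" "\<pi>s \<in> Q"
  then obtain t where t: "\<not> vstep (cn \<gamma> \<pi>s t) (\<pi>s t)" unfolding valid_def by auto
  show "gsum cs (\<lambda>js. gsum cs (\<lambda>u. W \<gamma> i \<pi>s js u) {u. factorization u w}) (P_l n l) = 0"
  proof (rule gsum_zero)
    fix js assume js: "js \<in> P_l n l"
    have r1: "cn i js t \<in> R n" using i Pl_range[OF js] by (cases t) auto
    show "gsum cs (\<lambda>u. W \<gamma> i \<pi>s js u) {u. factorization u w} = 0"
      by (rule gsum_zero) (auto intro!: ip_zero[of _ t] pd_zero[OF t r1 Pl_range[OF js]])
  qed simp
qed simp_all

end



context csr
begin

lemma gsum_cn:
  assumes "embT TYPE('b)" "embT TYPE(nat \<Rightarrow> 'b)"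
  shows "gsum cs F (Q :: (nat \<Rightarrow> 'b) set) = gsum cs (\<lambda>\<rho>. gsum cs (\<lambda>f. F (cn \<rho> f)) {f. cn \<rho> f \<in> Q}) UNIV"
proof -
  have "gsum cs (\<lambda>\<rho>. gsum cs (\<lambda>f. F (cn \<rho> f)) {f. cn \<rho> f \<in> Q}) UNIV
     = gsum cs (\<lambda>p. F (cn (fst p) (snd p))) (SIGMA \<rho>:UNIV. {f. cn \<rho> f \<in> Q})"
    by (rule gsum_Sigma[OF assms])
  also have "\<dots> = gsum cs F ((\<lambda>p. cn (fst p) (snd p)) ` (SIGMA \<rho>:UNIV. {f. cn \<rho> f \<in> Q}))"
    by (rule gsum_reindex[OF assms(2), symmetric]) (auto simp: inj_on_def)
  also have "(\<lambda>p. cn (fst p) (snd p)) ` (SIGMA \<rho>:UNIV. {f. cn \<rho> f \<in> Q}) = Q"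
  proof -
    have "\<And>f. f \<in> Q \<Longrightarrow> f \<in> (\<lambda>p. cn (fst p) (snd p)) ` (SIGMA \<rho>:UNIV. {f. cn \<rho> f \<in> Q})"
      by (rule_tac x="(f 0, \<lambda>t. f (Suc t))" in image_eqI) (simp_all add: cn_surj)
    thus ?thesis by auto
  qed
  finally show ?thesis ..
qed

lemma gsum_Pl:
  "gsum cs G (P_l n l) = gsum cs (\<lambda>k. gsum cs (\<lambda>js'. G (cn k js')) (P_l n l)) {1..n}"
proof -
  have "gsum cs G (P_l n l) = gsum cs (\<lambda>k. gsum cs (\<lambda>js'. G (cn k js')) {f. cn k f \<in> P_l n l}) UNIV"
    by (rule gsum_cn) simp_all
  also have "\<dots> = gsum cs (\<lambda>k. gsum cs (\<lambda>js'. G (cn k js')) {f. cn k f \<in> P_l n l}) {1..n}"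
    by (rule gsum_restrict) (auto simp: Pl_cons[of "cn _ _"] gsum_empty)
  also have "\<dots> = gsum cs (\<lambda>k. gsum cs (\<lambda>js'. G (cn k js')) (P_l n l)) {1..n}"
    by (rule gsum_cong) (auto simp: Pl_cons[of "cn _ _"])
  finally show ?thesis .
qed

lemma gsum_fact:
  "gsum cs H {u. factorization u w} =
   gsum cs (\<lambda>K. gsum cs (\<lambda>u'. H (cn (map w [0..<K]) u')) {u'. factorization u' (\<lambda>i. w (K + i))}) UNIV"
  for H :: "(nat \<Rightarrow> 'a::countable list) \<Rightarrow> 's"
proof -
  have "gsum cs H {u. factorization u w} = gsum cs (\<lambda>v. gsum cs (\<lambda>u'. H (cn v u')) {u'. factorization (cn v u') w}) UNIV"
    using gsum_cn[of H "{u. factorization u w}"] by simp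
  also have "\<dots> = gsum cs (\<lambda>v. gsum cs (\<lambda>u'. H (cn v u')) {u'. factorization (cn v u') w}) ((\<lambda>K. map w [0..<K]) ` UNIV)"
  proof (rule gsum_restrict)
    fix v assume "v \<notin> (\<lambda>K. map w [0..<K]) ` UNIV"
    hence "{u'. factorization (cn v u') w} = {}"
      by (auto simp: fact_cons[of "cn _ _"])
    thus "gsum cs (\<lambda>u'. H (cn v u')) {u'. factorization (cn v u') w} = 0" by (simp add: gsum_empty)
  qed simp_all
  also have "\<dots> = gsum cs (\<lambda>K. gsum cs (\<lambda>u'. H (cn (map w [0..<K]) u')) {u'. factorization (cn (map w [0..<K]) u') w}) UNIV"
    by (rule gsum_reindex) (auto simp: inj_on_def dest: arg_cong[where f=length])
  also have "\<dots> = gsum cs (\<lambda>K. gsum cs (\<lambda>u'. H (cn (map w [0..<K]) u')) {u'. factorization u' (\<lambda>i. w (K + i))}) UNIV"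
    by (rule gsum_cong) (auto simp: fact_cons[of "cn _ _"])
  finally show ?thesis .
qed

end

context pda
begin

lemma W_cons: "W \<gamma> i (cn \<rho> \<pi>s') (cn k js') (cn v u') = M \<gamma> \<rho> i k v * W \<rho> k \<pi>s' js' u'"
  by (subst ip_cons) simp

lemma first_step:
  "Om \<gamma> i Q w = gsum cs (\<lambda>\<rho>. \<Sum>k\<in>R n. s_act cs (M \<gamma> \<rho> i k) (Om \<rho> k {\<pi>s. cn \<rho> \<pi>s \<in> Q}) w) UNIV"
proof -
  define X where "X = (\<lambda>\<rho> k K \<pi>s' js' u'. M \<gamma> \<rho> i k (map w [0..<K]) * W \<rho> k \<pi>s' js' u')"
  define Qr where "Qr = (\<lambda>\<rho>. {\<pi>s. cn \<rho> \<pi>s \<in> Q})"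
  define F where "F = (\<lambda>K. {u'. factorization u' (\<lambda>i. w (K + i))})"
  have "Om \<gamma> i Q w = gsum cs (\<lambda>\<rho>. gsum cs (\<lambda>\<pi>s'. gsum cs (\<lambda>js. gsum cs (\<lambda>u. W \<gamma> i (cn \<rho> \<pi>s') js u) {u. factorization u w}) (P_l n l)) (Qr \<rho>)) UNIV"
    unfolding Om_def Qr_def by (rule gsum_cn) simp_all
  also have "\<dots> = gsum cs (\<lambda>\<rho>. gsum cs (\<lambda>\<pi>s'. gsum cs (\<lambda>k. gsum cs (\<lambda>js'. gsum cs (\<lambda>u. W \<gamma> i (cn \<rho> \<pi>s') (cn k js') u) {u. factorization u w}) (P_l n l)) (R n)) (Qr \<rho>)) UNIV"
    apply (rule gsum_cong, simp)
    apply (rule gsum_cong, simp)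
    apply (rule gsum_Pl)
    done
  also have "\<dots> = gsum cs (\<lambda>\<rho>. gsum cs (\<lambda>\<pi>s'. gsum cs (\<lambda>k. gsum cs (\<lambda>js'. gsum cs (\<lambda>K. gsum cs (\<lambda>u'.
        W \<gamma> i (cn \<rho> \<pi>s') (cn k js') (cn (map w [0..<K]) u')) (F K)) UNIV) (P_l n l)) (R n)) (Qr \<rho>)) UNIV"
    unfolding F_def
    apply (rule gsum_cong, simp)+
    apply (rule gsum_fact)
    done
  also have "\<dots> = gsum cs (\<lambda>\<rho>. gsum cs (\<lambda>\<pi>s'. gsum cs (\<lambda>k. gsum cs (\<lambda>js'. gsum cs (\<lambda>K. gsum cs (\<lambda>u'.
        X \<rho> k K \<pi>s' js' u') (F K)) UNIV) (P_l n l)) (R n)) (Qr \<rho>)) UNIV"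
    unfolding X_def W_cons ..
  also have "\<dots> = gsum cs (\<lambda>\<rho>. gsum cs (\<lambda>k. gsum cs (\<lambda>\<pi>s'. gsum cs (\<lambda>js'. gsum cs (\<lambda>K. gsum cs (\<lambda>u'.
        X \<rho> k K \<pi>s' js' u') (F K)) UNIV) (P_l n l)) (Qr \<rho>)) (R n)) UNIV"
    apply (rule gsum_cong, simp)
    apply (rule gsum_swap; simp)
    done
  also have "\<dots> = gsum cs (\<lambda>\<rho>. gsum cs (\<lambda>k. gsum cs (\<lambda>\<pi>s'. gsum cs (\<lambda>K. gsum cs (\<lambda>js'. gsum cs (\<lambda>u'.
        X \<rho> k K \<pi>s' js' u') (F K)) (P_l n l)) UNIV) (Qr \<rho>)) (R n)) UNIV"
    apply (rule gsum_cong, simp)+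
    apply (rule gsum_swap; simp)
    done
  also have "\<dots> = gsum cs (\<lambda>\<rho>. gsum cs (\<lambda>k. gsum cs (\<lambda>K. gsum cs (\<lambda>\<pi>s'. gsum cs (\<lambda>js'. gsum cs (\<lambda>u'.
        X \<rho> k K \<pi>s' js' u') (F K)) (P_l n l)) (Qr \<rho>)) UNIV) (R n)) UNIV"
    apply (rule gsum_cong, simp)+
    apply (rule gsum_swap; simp)
    done
  also have "\<dots> = gsum cs (\<lambda>\<rho>. \<Sum>k\<in>R n. s_act cs (M \<gamma> \<rho> i k) (Om \<rho> k (Qr \<rho>)) w) UNIV"
    unfolding X_def F_def s_act_def Om_def
    by (intro gsum_cong) (simp_all add: gsum_finite gsum_distr_l[symmetric])
  finally show ?thesis unfolding Qr_def .
qed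

end



lemma vstep_app: "x \<noteq> [] \<Longrightarrow> vstep (x @ \<beta>) (y @ \<beta>) \<longleftrightarrow> vstep x y"
  unfolding vstep_def by (cases x) auto

lemma cn_lift: "cn (\<gamma> @ \<beta>) (\<lambda>t. \<pi>s t @ \<beta>) t = cn \<gamma> \<pi>s t @ \<beta>"
  by (cases t) simp_all

lemma vstep_ne: "vstep x y \<Longrightarrow> x \<noteq> []"
  unfolding vstep_def by simp

context pda
begin

lemma lift_image:
  assumes "\<gamma> \<noteq> []"
  shows "(\<lambda>\<pi>s t. \<pi>s t @ \<beta>) ` valid \<gamma> = {\<pi>s. \<forall>t. cn (\<gamma> @ \<beta>) \<pi>s t \<noteq> \<beta>} \<inter> valid (\<gamma> @ \<beta>)"
proof
  show "(\<lambda>\<pi>s t. \<pi>s t @ \<beta>) ` valid \<gamma> \<subseteq> {\<pi>s. \<forall>t. cn (\<gamma> @ \<beta>) \<pi>s t \<noteq> \<beta>} \<inter> valid (\<gamma> @ \<beta>)"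
  proof clarify
    fix \<pi>s assume v: "\<pi>s \<in> valid \<gamma>"
    hence ne: "cn \<gamma> \<pi>s t \<noteq> []" for t unfolding valid_def using vstep_ne by blast
    show "(\<lambda>t. \<pi>s t @ \<beta>) \<in> {\<pi>s. \<forall>t. cn (\<gamma> @ \<beta>) \<pi>s t \<noteq> \<beta>} \<inter> valid (\<gamma> @ \<beta>)"
      using v ne unfolding valid_def by (simp add: cn_lift vstep_app)
  qed
next
  show "{\<pi>s. \<forall>t. cn (\<gamma> @ \<beta>) \<pi>s t \<noteq> \<beta>} \<inter> valid (\<gamma> @ \<beta>) \<subseteq> (\<lambda>\<pi>s t. \<pi>s t @ \<beta>) ` valid \<gamma>"
  proof clarify
    fix \<pi>s' assume nh: "\<forall>t. cn (\<gamma> @ \<beta>) \<pi>s' t \<noteq> \<beta>" and v: "\<pi>s' \<in> valid (\<gamma> @ \<beta>)"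
    have claim: "\<exists>\<delta>. \<delta> \<noteq> [] \<and> cn (\<gamma> @ \<beta>) \<pi>s' t = \<delta> @ \<beta>" for t
    proof (induction t)
      case 0 thus ?case using assms by auto
    next
      case (Suc t)
      then obtain \<delta> where d: "\<delta> \<noteq> []" "cn (\<gamma> @ \<beta>) \<pi>s' t = \<delta> @ \<beta>" by blast
      have "vstep (cn (\<gamma> @ \<beta>) \<pi>s' t) (\<pi>s' t)" using v unfolding valid_def by blast
      hence "vstep (\<delta> @ \<beta>) (\<pi>s' t)" using d(2) by simp
      then obtain e where e: "\<pi>s' t = e @ tl (\<delta> @ \<beta>)" unfolding vstep_def by blast
      hence e': "\<pi>s' t = (e @ tl \<delta>) @ \<beta>" using d(1) by (cases \<delta>) auto
      moreover have "\<pi>s' t \<noteq> \<beta>" using nh[rule_format, of "Suc t"] by simp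
      ultimately show ?case by auto
    qed
    define \<pi>s where "\<pi>s = (\<lambda>t. take (length (\<pi>s' t) - length \<beta>) (\<pi>s' t))"
    have eq: "\<pi>s' t = \<pi>s t @ \<beta>" for t
    proof -
      obtain \<delta> where "\<pi>s' t = \<delta> @ \<beta>" using claim[of "Suc t"] by auto
      thus ?thesis unfolding \<pi>s_def by simp
    qed
    have eqf: "\<pi>s' = (\<lambda>t. \<pi>s t @ \<beta>)" using eq by (intro ext) simp
    have ne: "cn \<gamma> \<pi>s t \<noteq> []" for t
    proof -
      obtain \<delta> where "\<delta> \<noteq> []" "cn (\<gamma> @ \<beta>) \<pi>s' t = \<delta> @ \<beta>" using claim by blast
      thus ?thesis unfolding eqf cn_lift by auto
    qed
    have "\<pi>s \<in> valid \<gamma>"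
      using v ne unfolding valid_def eqf by (simp add: cn_lift vstep_app)
    thus "\<pi>s' \<in> (\<lambda>\<pi>s t. \<pi>s t @ \<beta>) ` valid \<gamma>" unfolding eqf by blast
  qed
qed

lemma nohit_lift:
  assumes ne: "\<gamma> \<noteq> []" and i: "i \<in> R n"
  shows "Om (\<gamma> @ \<beta>) i {\<pi>s. \<forall>t. cn (\<gamma> @ \<beta>) \<pi>s t \<noteq> \<beta>} w = Om \<gamma> i UNIV w"
proof -
  have "Om (\<gamma> @ \<beta>) i {\<pi>s. \<forall>t. cn (\<gamma> @ \<beta>) \<pi>s t \<noteq> \<beta>} w
      = Om (\<gamma> @ \<beta>) i ((\<lambda>\<pi>s t. \<pi>s t @ \<beta>) ` valid \<gamma>) w"
    by (subst Om_valid[OF i]) (simp add: lift_image[OF ne])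
  also have "\<dots> = gsum cs (\<lambda>\<pi>s. gsum cs (\<lambda>js. gsum cs (\<lambda>u. W (\<gamma> @ \<beta>) i (\<lambda>t. \<pi>s t @ \<beta>) js u) {u. factorization u w}) (P_l n l)) (valid \<gamma>)"
    unfolding Om_def by (rule gsum_reindex) (auto simp: inj_on_def fun_eq_iff)
  also have "\<dots> = Om \<gamma> i (valid \<gamma>) w"
    unfolding Om_def
  proof (intro gsum_cong)
    fix \<pi>s js u assume v: "\<pi>s \<in> valid \<gamma>" and js: "js \<in> P_l n l"
    have ne': "cn \<gamma> \<pi>s t \<noteq> []" for t using v vstep_ne unfolding valid_def by blast
    have r: "cn i js t \<in> R n" for t using i Pl_range[OF js] by (cases t) auto
    show "W (\<gamma> @ \<beta>) i (\<lambda>t. \<pi>s t @ \<beta>) js u = W \<gamma> i \<pi>s js u"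
      by (simp add: cn_lift pd_lift[OF ne' r Pl_range[OF js]])
  qed simp_all
  also have "\<dots> = Om \<gamma> i UNIV w" by (subst (2) Om_valid[OF i]) simp
  finally show ?thesis .
qed

lemma hit_part:
  assumes ne: "\<gamma> \<noteq> []"
  shows "Om (\<gamma> @ \<beta>) i UNIV w = Om (\<gamma> @ \<beta>) i {\<pi>s. \<forall>t. cn (\<gamma> @ \<beta>) \<pi>s t \<noteq> \<beta>} w
     + gsum cs (\<lambda>a. Om (\<gamma> @ \<beta>) i {\<pi>s. cn (\<gamma> @ \<beta>) \<pi>s a = \<beta> \<and> (\<forall>t<a. cn (\<gamma> @ \<beta>) \<pi>s t \<noteq> \<beta>)} w) UNIV"
proof -
  define FH where "FH = (\<lambda>a. {\<pi>s. cn (\<gamma> @ \<beta>) \<pi>s a = \<beta> \<and> (\<forall>t<a. cn (\<gamma> @ \<beta>) \<pi>s t \<noteq> \<beta>)})"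
  define NH where "NH = {\<pi>s. \<forall>t. cn (\<gamma> @ \<beta>) \<pi>s t \<noteq> \<beta>}"
  have U: "UNIV = NH \<union> (\<Union>a\<in>UNIV. FH a)"
  proof -
    have "\<pi>s \<in> (\<Union>a\<in>UNIV. FH a)" if "\<pi>s \<notin> NH" for \<pi>s
    proof -
      from that obtain t where "cn (\<gamma> @ \<beta>) \<pi>s t = \<beta>" unfolding NH_def by auto
      hence "\<exists>a. cn (\<gamma> @ \<beta>) \<pi>s a = \<beta> \<and> (\<forall>t<a. cn (\<gamma> @ \<beta>) \<pi>s t \<noteq> \<beta>)"
        using exists_least_iff[of "\<lambda>t. cn (\<gamma> @ \<beta>) \<pi>s t = \<beta>"] by blast
      thus ?thesis unfolding FH_def by auto
    qed
    thus ?thesis by auto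
  qed
  have d1: "NH \<inter> (\<Union>a\<in>UNIV. FH a) = {}" unfolding NH_def FH_def by auto
  have d2: "FH a \<inter> FH a' = {}" if "a \<noteq> a'" for a a'
    using that unfolding FH_def by (auto dest: nat_neq_iff[THEN iffD1])
  have "Om (\<gamma> @ \<beta>) i UNIV w = Om (\<gamma> @ \<beta>) i NH w + Om (\<gamma> @ \<beta>) i (\<Union>a\<in>UNIV. FH a) w"
    by (subst U, rule Om_Un[OF d1])
  also have "Om (\<gamma> @ \<beta>) i (\<Union>a\<in>UNIV. FH a) w = gsum cs (\<lambda>a. Om (\<gamma> @ \<beta>) i (FH a) w) UNIV"
    by (rule Om_UN) (rule d2)
  finally show ?thesis unfolding FH_def NH_def .
qed

end



context pda
begin

lemma Gs_eq:
  "i \<in> R n \<Longrightarrow> Om (\<gamma> @ \<beta>) i {\<pi>s. cn (\<gamma> @ \<beta>) \<pi>s a = \<beta> \<and> (\<forall>t<a. cn (\<gamma> @ \<beta>) \<pi>s t \<noteq> \<beta>)} w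
     = m_act cs n (M_pow cs n M a \<gamma> []) (\<lambda>k. Om \<beta> k UNIV) i w"
proof (induction a arbitrary: \<gamma> i w)
  case 0
  show ?case
  proof (cases "\<gamma> = []")
    case True thus ?thesis by (simp add: M_one_def m_act_one[OF "0.prems"])
  next
    case False thus ?thesis
      by (simp add: M_one_def Om_empty m_zero_def s_zero_def m_act_zero_l)
  qed
next
  case (Suc a)
  note i = Suc.prems
  show ?case
  proof (cases "\<gamma> = []")
    case True
    have E: "{\<pi>s. cn ([] @ \<beta>) \<pi>s (Suc a) = \<beta> \<and> (\<forall>t<Suc a. cn ([] @ \<beta>) \<pi>s t \<noteq> \<beta>)} = {}"
      by (auto dest: spec[of _ 0])
    have Z: "m_act cs n (M_pow cs n M (Suc a) [] []) (\<lambda>k. Om \<beta> k UNIV) i w = 0"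
      by (rule m_act_zero_l, erule Mpow_nil[OF i])
    show ?thesis unfolding True by (simp only: E Z Om_empty)
  next
    case False
    have Qe: "{\<pi>s'. cn \<rho> \<pi>s' \<in> {\<pi>s. cn (\<gamma> @ \<beta>) \<pi>s (Suc a) = \<beta> \<and> (\<forall>t<Suc a. cn (\<gamma> @ \<beta>) \<pi>s t \<noteq> \<beta>)}}
       = {\<pi>s. cn \<rho> \<pi>s a = \<beta> \<and> (\<forall>t<a. cn \<rho> \<pi>s t \<noteq> \<beta>)}" for \<rho>
      using False by (auto simp: less_Suc_eq_0_disj)
    have "Om (\<gamma> @ \<beta>) i {\<pi>s. cn (\<gamma> @ \<beta>) \<pi>s (Suc a) = \<beta> \<and> (\<forall>t<Suc a. cn (\<gamma> @ \<beta>) \<pi>s t \<noteq> \<beta>)} w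
      = gsum cs (\<lambda>\<rho>. \<Sum>k\<in>R n. s_act cs (M (\<gamma> @ \<beta>) \<rho> i k) (Om \<rho> k {\<pi>s. cn \<rho> \<pi>s a = \<beta> \<and> (\<forall>t<a. cn \<rho> \<pi>s t \<noteq> \<beta>)}) w) UNIV"
      by (subst first_step) (simp only: Qe)
    also have "\<dots> = gsum cs (\<lambda>\<sigma>'. \<Sum>k\<in>R n. s_act cs (M \<gamma> \<sigma>' i k) (Om (\<sigma>' @ \<beta>) k {\<pi>s. cn (\<sigma>' @ \<beta>) \<pi>s a = \<beta> \<and> (\<forall>t<a. cn (\<sigma>' @ \<beta>) \<pi>s t \<noteq> \<beta>)}) w) UNIV"
      by (rule lift_gsum[OF False i]) (simp add: s_act_zero_l)
    also have "\<dots> = gsum cs (\<lambda>\<sigma>'. m_act cs n (M \<gamma> \<sigma>') (m_act cs n (M_pow cs n M a \<sigma>' []) (\<lambda>k. Om \<beta> k UNIV)) i w) UNIV"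
    proof (rule gsum_cong)
      fix \<sigma>'
      show "(\<Sum>k\<in>R n. s_act cs (M \<gamma> \<sigma>' i k) (Om (\<sigma>' @ \<beta>) k {\<pi>s. cn (\<sigma>' @ \<beta>) \<pi>s a = \<beta> \<and> (\<forall>t<a. cn (\<sigma>' @ \<beta>) \<pi>s t \<noteq> \<beta>)}) w)
        = m_act cs n (M \<gamma> \<sigma>') (m_act cs n (M_pow cs n M a \<sigma>' []) (\<lambda>k. Om \<beta> k UNIV)) i w"
        unfolding m_act_def[of cs n "M \<gamma> \<sigma>'"]
        by (rule sum.cong[OF refl], rule arg_cong[where f="\<lambda>z. s_act cs _ z w"], rule ext, rule Suc.IH, assumption)
    qed simp
    also have "\<dots> = gsum cs (\<lambda>\<sigma>'. m_act cs n (m_mult n (M \<gamma> \<sigma>') (M_pow cs n M a \<sigma>' [])) (\<lambda>k. Om \<beta> k UNIV) i w) UNIV"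
      by (simp add: m_act_assoc)
    also have "\<dots> = m_act cs n (\<lambda>i k v. gsum cs (\<lambda>\<sigma>'. m_mult n (M \<gamma> \<sigma>') (M_pow cs n M a \<sigma>' []) i k v) UNIV) (\<lambda>k. Om \<beta> k UNIV) i w"
      by (simp add: m_act_gsum_l)
    also have "\<dots> = m_act cs n (M_pow cs n M (Suc a) \<gamma> []) (\<lambda>k. Om \<beta> k UNIV) i w"
      by (rule fun_cong[OF m_act_cong]) (auto intro!: ext simp: M_pow_left'[OF i] simp del: M_pow.simps(2))
    finally show ?thesis .
  qed
qed

lemma K_lemma:
  assumes ne: "\<gamma> \<noteq> []" and i: "i \<in> R n"
  shows "Om (\<gamma> @ \<beta>) i UNIV w = Om \<gamma> i UNIV w + m_act cs n (M_star cs n M \<gamma> []) (\<lambda>k. Om \<beta> k UNIV) i w"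
proof -
  have "Om (\<gamma> @ \<beta>) i UNIV w = Om \<gamma> i UNIV w + gsum cs (\<lambda>a. m_act cs n (M_pow cs n M a \<gamma> []) (\<lambda>k. Om \<beta> k UNIV) i w) UNIV"
    by (simp add: hit_part[OF ne] nohit_lift[OF ne i] Gs_eq[OF i] del: M_pow.simps(2))
  also have "gsum cs (\<lambda>a. m_act cs n (M_pow cs n M a \<gamma> []) (\<lambda>k. Om \<beta> k UNIV) i w) UNIV
      = m_act cs n (M_star cs n M \<gamma> []) (\<lambda>k. Om \<beta> k UNIV) i w"
    unfolding M_star_def by (simp add: m_act_gsum_l del: M_pow.simps(2))
  finally show ?thesis .
qed

lemma Zlist:
  "k \<in> R n \<Longrightarrow> Om \<rho> k UNIV w = (\<Sum>j<length \<rho>. m_act cs n (m_prod n (map (\<lambda>p. M_star cs n M [p] []) (take j \<rho>)))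
        (\<lambda>k'. Om [\<rho> ! j] k' UNIV) k w)"
proof (induction \<rho> arbitrary: k w)
  case Nil
  have "valid [] = {}" unfolding valid_def vstep_def by (auto intro: exI[of _ 0])
  thus ?case using Om_valid[OF Nil.prems, of "[]" UNIV w] by (simp add: Om_empty)
next
  case (Cons q \<beta>)
  define x where "x = (\<lambda>p. M_star cs n M [p] [])"
  have "Om (q # \<beta>) k UNIV w = Om ([q] @ \<beta>) k UNIV w" by simp
  also have "\<dots> = Om [q] k UNIV w + m_act cs n (x q) (\<lambda>k. Om \<beta> k UNIV) k w"
    unfolding x_def by (rule K_lemma) (use Cons.prems in auto)
  also have "m_act cs n (x q) (\<lambda>k. Om \<beta> k UNIV) k w
     = m_act cs n (x q) (\<lambda>k' w'. \<Sum>j<length \<beta>. m_act cs n (m_prod n (map x (take j \<beta>))) (\<lambda>k'. Om [\<beta> ! j] k' UNIV) k' w') k w"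
    by (rule fun_cong[OF m_act_cong]) (auto intro!: ext simp: Cons.IH x_def)
  also have "\<dots> = (\<Sum>j<length \<beta>. m_act cs n (m_prod n (map x (take (Suc j) (q # \<beta>)))) (\<lambda>k'. Om [(q # \<beta>) ! Suc j] k' UNIV) k w)"
    by (simp add: m_act_sum_r m_act_assoc m_prod_def)
  also have "Om [q] k UNIV w = m_act cs n (m_prod n (map x (take 0 (q # \<beta>)))) (\<lambda>k'. Om [(q # \<beta>) ! 0] k' UNIV) k w"
    by (simp add: m_prod_def m_act_one[OF Cons.prems])
  finally show ?case unfolding x_def by (simp add: sum.lessThan_Suc_shift del: sum.lessThan_Suc)
qed

lemma conj4:
  assumes i: "i \<in> R n"
  shows "M_omega cs ip n l M [p] i = (\<lambda>w. gsum cs (\<lambda>\<pi>. \<Sum>k\<in>{1..n}. s_act cs (M [p] \<pi> i k)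
                   (\<lambda>w'. \<Sum>j<length \<pi>. m_act cs n (m_prod n (map (\<lambda>p. M_star cs n M [p] []) (take j \<pi>))) (M_omega cs ip n l M [\<pi> ! j]) k w') w)
                 {\<pi>. \<pi> \<noteq> []})"
proof (rule ext)
  fix w
  have Mo: "M_omega cs ip n l M \<rho> = (\<lambda>k w. Om \<rho> k UNIV w)" for \<rho>
    by (intro ext) (simp add: Om_M_omega)
  have "M_omega cs ip n l M [p] i w = gsum cs (\<lambda>\<rho>. \<Sum>k\<in>R n. s_act cs (M [p] \<rho> i k) (Om \<rho> k UNIV) w) UNIV"
    by (simp add: Om_M_omega first_step[of "[p]" i UNIV])
  also have "\<dots> = gsum cs (\<lambda>\<rho>. \<Sum>k\<in>R n. s_act cs (M [p] \<rho> i k) (Om \<rho> k UNIV) w) {\<pi>. \<pi> \<noteq> []}"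
    by (rule gsum_restrict) (auto intro!: sum.neutral s_act_zero_r simp: Zlist)
  also have "\<dots> = gsum cs (\<lambda>\<pi>. \<Sum>k\<in>{1..n}. s_act cs (M [p] \<pi> i k)
                   (\<lambda>w'. \<Sum>j<length \<pi>. m_act cs n (m_prod n (map (\<lambda>p. M_star cs n M [p] []) (take j \<pi>))) (M_omega cs ip n l M [\<pi> ! j]) k w') w)
                 {\<pi>. \<pi> \<noteq> []}"
    by (rule gsum_cong) (auto intro!: sum.cong arg_cong[where f="\<lambda>z. s_act cs _ z w"] ext simp: Zlist Mo)
  finally show "M_omega cs ip n l M [p] i w = \<dots>" .
qed

end


theorem corollary12:
  fixes cs :: "'s::semiring_1 csum_op" and ip :: "(nat \<Rightarrow> 's) \<Rightarrow> 's"
    and n l :: nat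
    and M :: "'g::finite list \<Rightarrow> 'g list \<Rightarrow> nat \<Rightarrow> nat \<Rightarrow> 'a::finite list \<Rightarrow> 's"
    and I P :: "nat \<Rightarrow> 'a list \<Rightarrow> 's" and p0 :: 'g
    and x0 :: "'a list \<Rightarrow> 's" and x :: "'g \<Rightarrow> ('a, 's) blk"
    and z0 :: "(nat \<Rightarrow> 'a) \<Rightarrow> 's" and z :: "'g \<Rightarrow> nat \<Rightarrow> (nat \<Rightarrow> 'a) \<Rightarrow> 's"
  assumes "complete_star_omega_semiring cs ip"
    and "omega_pda n M I P p0 l"
  defines "x0 \<equiv> rc_mult n (r_mult n I (M_star cs n M [p0] [])) P"
    and "x \<equiv> \<lambda>p. M_star cs n M [p] []"
    and "z0 \<equiv> r_act cs n I (M_omega cs ip n l M [p0])"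
    and "z \<equiv> \<lambda>p. M_omega cs ip n l M [p]"
  shows "x0 = rc_mult n (r_mult n I (x p0)) P
    \<and> (\<forall>p. blk_eq n (x p)
           (\<lambda>i j w. gsum cs (\<lambda>\<pi>. m_mult n (M [p] \<pi>) (m_prod n (map x \<pi>)) i j w) UNIV))
    \<and> z0 = r_act cs n I (z p0)
    \<and> (\<forall>p. \<forall>i\<in>{1..n}. z p i =
           (\<lambda>w. gsum cs (\<lambda>\<pi>. \<Sum>k\<in>{1..n}. s_act cs (M [p] \<pi> i k)
                   (\<lambda>w'. \<Sum>j<length \<pi>. m_act cs n (m_prod n (map x (take j \<pi>))) (z (\<pi> ! j)) k w') w)
                 {\<pi>. \<pi> \<noteq> []}))"
proof -
  have cso: "complete_star_omega_semiring cs ip" by (rule assms(1))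
  have pda: "omega_pda n M I P p0 l" by (rule assms(2))
  interpret pda cs ip n l M
  proof unfold_locales
    show "complete_semiring cs" using cso unfolding complete_star_omega_semiring_def by blast
    show "complete_star_omega_semiring cs ip" by (rule cso)
    show "pushdown_matrix n M" using pda unfolding omega_pda_def by blast
  qed
  show ?thesis
    unfolding assms(3-6)
  proof (intro conjI allI ballI)
    fix p
    show "blk_eq n (M_star cs n M [p] [])
           (\<lambda>i j w. gsum cs (\<lambda>\<pi>. m_mult n (M [p] \<pi>) (m_prod n (map (\<lambda>p. M_star cs n M [p] []) \<pi>)) i j w) UNIV)"
      unfolding blk_eq_def by (auto intro!: ext conj2)
  next
    fix p i assume i: "i \<in> {1..n}"
    show "M_omega cs ip n l M [p] i = (\<lambda>w. gsum cs (\<lambda>\<pi>. \<Sum>k\<in>{1..n}. s_act cs (M [p] \<pi> i k)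
                   (\<lambda>w'. \<Sum>j<length \<pi>. m_act cs n (m_prod n (map (\<lambda>p. M_star cs n M [p] []) (take j \<pi>))) (M_omega cs ip n l M [\<pi> ! j]) k w') w)
                 {\<pi>. \<pi> \<noteq> []})"
      by (rule conj4[OF i])
  qed simp_all
qed

end
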